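(* Let $z>0$ and $k\ge0$ be integers. For $$v<-\log\left(1-\frac{1-2q}{1-h^z}\right)$$ we have $$\mathbf E\left(e^{v\xi(z,\infty)};\,\xi(0,\infty)=k\right)=(1-2q)(2q)^k\varphi^k(v)\psi(v),$$ $$\mathbf E\left(e^{v\xi(-z,\infty)};\,\xi(0,\infty)=k\right)=(1-2q)(2q)^k\varphi^k(v),$$ where $$\varphi(v)=\frac{1-\frac{4q^2-h^z}{2q(1-2q)}(e^v-1)}{1-\frac{2q-h^z}{1-2q}(e^v-1)},\qquad \psi(v)=\frac{e^v}{1-\frac{2q-h^z}{1-2q}(e^v-1)}.$$ Moreover, for $k=1,2,\dots$ $$\mathbf P(\Xi(\{0,z\},\infty)=k)=\frac{1-2q}{2h^{z/2}}\left(\left(\frac{2q+h^{z/2}}{1+h^{z/2}}\right)^k-\left(\frac{2q-h^{z/2}}{1-h^{z/2}}\right)^k\right),$$ and for $k=0,1,2,\dots$ $$\mathbf P(\Xi(\{0,-z\},\infty)=k)=\frac{1-2q}{2}\left(\left(\frac{2q+h^{z/2}}{1+h^{z/2}}\right)^k+\left(\frac{2q-h^{z/2}}{1-h^{z/2}}\right)^k\right).$$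
   Context: Let $0<q<p<1$ with $p+q=1$ and $h=q/p$. Let $X_1,X_2,\dots$ be i.i.d. with $\mathbf P(X_1=1)=p$, $\mathbf P(X_1=-1)=q$, $S_0=0$, $S_n=X_1+\dots+X_n$. For $x\in\mathbb Z$, $\xi(x,\infty)=\#\{k\ge1:S_k=x\}$, and for $A\subset\mathbb Z$, $\Xi(A,\infty)=\sum_{x\in A}\xi(x,\infty)$. $\mathbf E(Y;E)$ denotes $\mathbf E(Y\mathbf 1_E)$. *)

theory Defs
  imports "HOL-Probability.Probability"
begin

definition walk :: "(nat \<Rightarrow> 'a \<Rightarrow> int) \<Rightarrow> nat \<Rightarrow> 'a \<Rightarrow> int" where
  "walk X n \<omega> = (\<Sum>i\<in>{1..n}. X i \<omega>)"

definition xi :: "(nat \<Rightarrow> 'a \<Rightarrow> int) \<Rightarrow> int \<Rightarrow> 'a \<Rightarrow> nat" where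
  "xi X x \<omega> = card {k::nat. k \<ge> 1 \<and> walk X k \<omega> = x}"

definition Xi :: "(nat \<Rightarrow> 'a \<Rightarrow> int) \<Rightarrow> int set \<Rightarrow> 'a \<Rightarrow> nat" where
  "Xi X A \<omega> = (\<Sum>x\<in>A. xi X x \<omega>)"

definition phi_fun :: "real \<Rightarrow> nat \<Rightarrow> real \<Rightarrow> real" where
  "phi_fun q z v = (let h = q / (1 - q) in
     (1 - (4*q^2 - h^z) / (2*q*(1 - 2*q)) * (exp v - 1)) /
     (1 - (2*q - h^z) / (1 - 2*q) * (exp v - 1)))"

definition psi_fun :: "real \<Rightarrow> nat \<Rightarrow> real \<Rightarrow> real" where
  "psi_fun q z v = (let h = q / (1 - q) in
     exp v / (1 - (2*q - h^z) / (1 - 2*q) * (exp v - 1)))"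

end

theory Submission
  imports Defs "HOL-Probability.Probability"
begin

definition stp :: "int \<Rightarrow> int" where "stp x = (if x = 1 then 1 else -1)"
definition W :: "int stream \<Rightarrow> nat \<Rightarrow> int" where "W s n = (\<Sum>i<n. stp (s !! i))"

lemma W_0[simp]: "W s 0 = 0" by (simp add: W_def)
lemma W_Suc: "W s (Suc n) = W s n + stp (s !! n)" by (simp add: W_def)
lemma W_Cons_Suc[simp]: "W (x ## s) (Suc n) = stp x + W s n"
  by (induction n) (auto simp: W_Suc)
lemma stp_cases: "stp x = 1 \<or> stp x = -1" by (simp add: stp_def)
lemma W_sdrop: "W (sdrop n s) k = W s (n + k) - W s n"
  by (induction k) (auto simp: W_Suc sdrop_snth add.commute)
lemma W_shift_le: "k \<le> n \<Longrightarrow> W (stake n s @- t) k = W s k"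
  by (induction k) (auto simp: W_Suc)
lemma sdrop_shift_stake: "sdrop n (stake n s @- t) = t"
  by (simp add: sdrop_shift)

lemma W_meas[measurable]: "(\<lambda>s. W s n) \<in> measurable (stream_space (count_space UNIV)) (count_space UNIV)"
proof -
  have "(\<lambda>s. W s n) = (\<lambda>l. \<Sum>i<n. stp (l ! i)) \<circ> stake n"
    by (auto simp: W_def fun_eq_iff)
  then show ?thesis by (metis measurable_comp measurable_count_space measurable_stake)
qed

lemma finite_dep_meas:
  "Measurable.pred (stream_space (count_space UNIV)) (\<lambda>s::int stream. Q (stake n s))"
proof -
  have "(Q \<circ> stake n) \<in> measurable (stream_space (count_space UNIV)) (count_space UNIV)"
    by (rule measurable_comp[OF measurable_stake]) simp
  then show ?thesis by (simp add: comp_def)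
qed

locale rw =
  fixes N :: "int measure" and p q :: real
  assumes N_prob: "prob_space N"
  and sets_N: "sets N = sets (count_space UNIV)"
  and N1: "emeasure N {1} = ennreal p"
  and Nq: "emeasure N (UNIV - {1}) = ennreal q"
  and q_pos: "0 < q" and qp: "q < p" and pq: "p + q = 1"
begin

abbreviation "S \<equiv> stream_space N"
definition "Pr P = measure S {s. P s}"

lemma space_N: "space N = UNIV"
  using sets_eq_imp_space_eq[OF sets_N] by simp

lemma space_S[simp]: "space S = UNIV"
  by (simp add: space_stream_space space_N)

lemma sets_S: "sets S = sets (stream_space (count_space UNIV))"
  by (rule sets_stream_space_cong[OF sets_N])

lemma measS: "f \<in> measurable (stream_space (count_space UNIV)) K \<Longrightarrow> f \<in> measurable S K"
  using measurable_cong_sets[OF sets_S refl] by blast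

lemma measS': "f \<in> measurable K (stream_space (count_space UNIV)) \<Longrightarrow> f \<in> measurable K S"
  using measurable_cong_sets[OF refl sets_S] by blast

lemma predS: "{s. P s} \<in> sets S" if "Measurable.pred (stream_space (count_space UNIV)) P"
proof -
  have "{s \<in> space (stream_space (count_space UNIV)). P s} \<in> sets (stream_space (count_space UNIV))"
    using that by (simp add: pred_def)
  then show ?thesis by (simp add: sets_S space_stream_space)
qed

sublocale N: prob_space N by (rule N_prob)
sublocale SS: prob_space S by (rule N.prob_space_stream_space)

lemma p_pos: "0 < p" using q_pos qp by simp
lemma p_lt1: "p < 1" using q_pos pq by simp

lemma measN[measurable]: "f \<in> borel_measurable N"
  by (simp add: measurable_cong_sets[OF sets_N refl])

lemma emS1[simp]: "emeasure S UNIV = 1"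
  by (metis SS.emeasure_space_1 space_S)

lemma nn_N: "(\<integral>\<^sup>+x. g (stp x) \<partial>N) = ennreal p * g 1 + ennreal q * g (-1)"
proof -
  have "(\<integral>\<^sup>+x. g (stp x) \<partial>N) = (\<integral>\<^sup>+x. g 1 * indicator {1} x + g (-1) * indicator (UNIV - {1}) x \<partial>N)"
    by (intro nn_integral_cong) (auto simp: stp_def split: split_indicator)
  also have "\<dots> = g 1 * emeasure N {1} + g (-1) * emeasure N (UNIV - {1})"
    using sets_N by (subst nn_integral_add) (auto simp: nn_integral_cmult_indicator)
  finally show ?thesis by (simp add: N1 Nq mult.commute)
qed

lemma first_step_nn:
  assumes [measurable]: "f \<in> borel_measurable S" "g 1 \<in> borel_measurable S" "g (-1) \<in> borel_measurable S"
  and eq: "\<And>x s. f (x ## s) = g (stp x) s"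
  shows "(\<integral>\<^sup>+s. f s \<partial>S) = ennreal p * (\<integral>\<^sup>+s. g 1 s \<partial>S) + ennreal q * (\<integral>\<^sup>+s. g (-1) s \<partial>S)"
proof -
  have "(\<integral>\<^sup>+s. f s \<partial>S) = (\<integral>\<^sup>+x. (\<integral>\<^sup>+s. f (x ## s) \<partial>S) \<partial>N)"
    by (rule N.nn_integral_stream_space) simp
  also have "\<dots> = (\<integral>\<^sup>+x. (\<lambda>y. \<integral>\<^sup>+s. g y s \<partial>S) (stp x) \<partial>N)"
    by (simp add: eq)
  also have "\<dots> = ennreal p * (\<integral>\<^sup>+s. g 1 s \<partial>S) + ennreal q * (\<integral>\<^sup>+s. g (-1) s \<partial>S)" by (rule nn_N)
  finally show ?thesis .
qed

lemma Pr_nn: "{s. P s} \<in> sets S \<Longrightarrow> ennreal (Pr P) = (\<integral>\<^sup>+s. indicator {s. P s} s \<partial>S)"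
  by (simp add: Pr_def SS.emeasure_eq_measure[symmetric])

lemma first_step:
  assumes "{s. P s} \<in> sets S" "{s. Q 1 s} \<in> sets S" "{s. Q (-1) s} \<in> sets S"
  and eq: "\<And>x s. P (x ## s) = Q (stp x) s"
  shows "Pr P = p * Pr (Q 1) + q * Pr (Q (-1))"
proof -
  have "ennreal (Pr P) = ennreal p * ennreal (Pr (Q 1)) + ennreal q * ennreal (Pr (Q (-1)))"
    unfolding Pr_nn[OF assms(1)] Pr_nn[OF assms(2)] Pr_nn[OF assms(3)]
    by (rule first_step_nn[where g="\<lambda>y. indicator {s. Q y s}"]) (use assms in \<open>auto split: split_indicator\<close>)
  then show ?thesis using p_pos q_pos
    by (simp add: Pr_def ennreal_mult'[symmetric] ennreal_plus[symmetric] del: ennreal_plus)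
qed

lemma shift_nn:
  assumes "F \<in> borel_measurable S"
  shows "(\<integral>\<^sup>+s. F s \<partial>S) = (\<integral>\<^sup>+s. \<integral>\<^sup>+t. F (stake n s @- t) \<partial>S \<partial>S)"
  using assms
proof (induction n arbitrary: F)
  case 0 then show ?case by simp
next
  case (Suc n)
  note [measurable] = Suc.prems
  have m1[measurable]: "(\<lambda>s. F (x ## s)) \<in> borel_measurable S" for x
    by (intro measurable_compose[OF _ Suc.prems] measurable_Stream) (auto simp: space_N)
  have mG: "(\<lambda>s. \<integral>\<^sup>+t. F (stake m s @- t) \<partial>S) \<in> borel_measurable S" for m
  proof -
    have "(\<lambda>(s,t). F (stake m s @- t)) \<in> borel_measurable (S \<Otimes>\<^sub>M S)"
      by measurable
    then show ?thesis by (rule SS.borel_measurable_nn_integral)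
  qed
  have "(\<integral>\<^sup>+s. F s \<partial>S) = (\<integral>\<^sup>+x. (\<integral>\<^sup>+s. F (x ## s) \<partial>S) \<partial>N)"
    by (rule N.nn_integral_stream_space) simp
  also have "\<dots> = (\<integral>\<^sup>+x. (\<integral>\<^sup>+s. \<integral>\<^sup>+t. F (x ## (stake n s @- t)) \<partial>S \<partial>S) \<partial>N)"
    by (intro nn_integral_cong Suc.IH) measurable
  also have "\<dots> = (\<integral>\<^sup>+x. (\<integral>\<^sup>+s. (\<lambda>s. \<integral>\<^sup>+t. F (stake (Suc n) s @- t) \<partial>S) (x ## s) \<partial>S) \<partial>N)"
    by simp
  also have "\<dots> = (\<integral>\<^sup>+s. \<integral>\<^sup>+t. F (stake (Suc n) s @- t) \<partial>S \<partial>S)"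
    by (rule N.nn_integral_stream_space[symmetric]) (rule mG)
  finally show ?case .
qed

lemma shift_prod:
  assumes A: "{s. A s} \<in> sets S" and B: "{s. B s} \<in> sets S"
  and dep: "\<And>s t. A (stake n s @- t) = A s"
  shows "Pr (\<lambda>s. A s \<and> B (sdrop n s)) = Pr A * Pr B"
proof -
  have m: "{s. A s \<and> B (sdrop n s)} \<in> sets S"
  proof -
    have "{s. A s \<and> B (sdrop n s)} = {s. A s} \<inter> (sdrop n -` {s. B s} \<inter> space S)" by auto
    also have "\<dots> \<in> sets S" using A B by (intro sets.Int measurable_sets[OF measurable_sdrop])
    finally show ?thesis .
  qed
  have "ennreal (Pr (\<lambda>s. A s \<and> B (sdrop n s))) = (\<integral>\<^sup>+s. indicator {s. A s \<and> B (sdrop n s)} s \<partial>S)"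
    by (rule Pr_nn[OF m])
  also have "\<dots> = (\<integral>\<^sup>+s. \<integral>\<^sup>+t. indicator {s. A s \<and> B (sdrop n s)} (stake n s @- t) \<partial>S \<partial>S)"
    by (rule shift_nn) (use m in simp)
  also have "\<dots> = (\<integral>\<^sup>+s. indicator {s. A s} s * (\<integral>\<^sup>+t. indicator {s. B s} t \<partial>S) \<partial>S)"
    by (subst nn_integral_cmult[symmetric]) (auto intro!: nn_integral_cong simp: dep sdrop_shift_stake borel_measurable_indicator[OF B] split: split_indicator)
  also have "\<dots> = (\<integral>\<^sup>+s. indicator {s. A s} s \<partial>S) * (\<integral>\<^sup>+t. indicator {s. B s} t \<partial>S)"
    by (rule nn_integral_multc) (use A in simp)
  also have "\<dots> = ennreal (Pr A * Pr B)"
    by (simp add: Pr_nn[OF A, symmetric] Pr_nn[OF B, symmetric] ennreal_mult' Pr_def)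
  finally show ?thesis by (simp add: Pr_def)
qed

end

definition HB :: "int \<Rightarrow> int \<Rightarrow> int \<Rightarrow> int stream \<Rightarrow> bool" where
  "HB c d y s \<longleftrightarrow> (\<exists>m. y + W s m = d \<and> (\<forall>k<m. y + W s k \<noteq> c \<and> y + W s k \<noteq> d))"

lemma W_eq_meas[measurable]: "Measurable.pred (stream_space (count_space UNIV)) (\<lambda>s. y + W s m = d)"
  using finite_dep_meas[where n=m and Q="\<lambda>l. y + (\<Sum>i<m. stp (l ! i)) = d"]
  by (simp add: W_def)

lemma HB_meas[measurable]: "Measurable.pred (stream_space (count_space UNIV)) (HB c d y)"
  unfolding HB_def by measurable

lemma HB_d[simp]: "HB c d d s" unfolding HB_def by (auto intro!: exI[of _ 0])
lemma HB_c[simp]: "c \<noteq> d \<Longrightarrow> \<not> HB c d c s" unfolding HB_def by (metis W_0 add_0_right neq0_conv)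

lemma HB_Cons: assumes "y \<noteq> c" "y \<noteq> d" shows "HB c d y (x ## s) \<longleftrightarrow> HB c d (y + stp x) s"
proof
  assume "HB c d y (x ## s)"
  then obtain m where m: "y + W (x##s) m = d" "\<forall>k<m. y + W (x##s) k \<noteq> c \<and> y + W (x##s) k \<noteq> d"
    unfolding HB_def by blast
  then obtain m' where "m = Suc m'" using assms by (cases m) auto
  with m show "HB c d (y + stp x) s" unfolding HB_def
    by (intro exI[of _ m']) (auto simp: algebra_simps)
next
  assume "HB c d (y + stp x) s"
  then obtain m where m: "y + stp x + W s m = d" "\<forall>k<m. y + stp x + W s k \<noteq> c \<and> y + stp x + W s k \<noteq> d"
    unfolding HB_def by blast
  have "\<forall>k<Suc m. y + W (x ## s) k \<noteq> c \<and> y + W (x ## s) k \<noteq> d"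
  proof (intro allI impI)
    fix k assume "k < Suc m" then show "y + W (x ## s) k \<noteq> c \<and> y + W (x ## s) k \<noteq> d"
      using m assms by (cases k) (auto simp: algebra_simps)
  qed
  moreover have "y + W (x ## s) (Suc m) = d" using m by (simp add: algebra_simps)
  ultimately show "HB c d y (x ## s)" unfolding HB_def by blast
qed

lemma W_step: "W s (Suc k) = W s k + 1 \<or> W s (Suc k) = W s k - 1"
  using stp_cases[of "s !! k"] by (auto simp: W_Suc)

lemma cont_below: "y < d \<Longrightarrow> \<forall>k<m. y + W s k \<noteq> d \<Longrightarrow> k < m \<Longrightarrow> y + W s k < d"
proof (induction k)
  case 0 then show ?case by simp
next
  case (Suc k)
  then have "y + W s k < d" by simp
  moreover have "y + W s (Suc k) \<noteq> d" using Suc by simp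
  ultimately show ?case using W_step[of s k] by auto
qed

lemma cont_above: "y > d \<Longrightarrow> \<forall>k<m. y + W s k \<noteq> d \<Longrightarrow> k < m \<Longrightarrow> y + W s k > d"
proof (induction k)
  case 0 then show ?case by simp
next
  case (Suc k)
  then have "y + W s k > d" by simp
  moreover have "y + W s (Suc k) \<noteq> d" using Suc by simp
  ultimately show ?case using W_step[of s k] by auto
qed

lemma cont_below_end: "y < d \<Longrightarrow> \<forall>k<m. y + W s k \<noteq> d \<Longrightarrow> y + W s m \<le> d"
proof (cases m)
  case (Suc m') assume "y < d" "\<forall>k<m. y + W s k \<noteq> d"
  then have "y + W s m' < d" using cont_below Suc by blast
  then show ?thesis using W_step[of s m'] Suc by auto
qed simp

lemma cont_above_end: "y > d \<Longrightarrow> \<forall>k<m. y + W s k \<noteq> d \<Longrightarrow> y + W s m \<ge> d"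
proof (cases m)
  case (Suc m') assume "y > d" "\<forall>k<m. y + W s k \<noteq> d"
  then have "y + W s m' > d" using cont_above Suc by blast
  then show ?thesis using W_step[of s m'] Suc by auto
qed simp

lemma W_bound: "\<bar>W s k\<bar> \<le> int k"
proof (induction k)
  case (Suc k) then show ?case using W_step[of s k] by auto
qed simp

lemma recursion_solve:
  fixes f :: "int \<Rightarrow> real" and p q h :: real
  assumes pq: "p + q = 1" and p: "p > 0" and h: "h = q / p" and h0: "0 < h" and h1: "h < 1"
    and rec: "\<And>y. c < y \<Longrightarrow> y < d \<Longrightarrow> f y = p * f (y + 1) + q * f (y - 1)"
    and cd: "c < d" and y: "c \<le> y" "y \<le> d"
  shows "f y = f c + (f d - f c) * (1 - h ^ nat (y - c)) / (1 - h ^ nat (d - c))"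
proof -
  define D where "D = nat (d - c)"
  define g where "g j = f (c + int j)" for j
  define \<Delta> where "\<Delta> j = g (Suc j) - g j" for j
  have D: "D > 0" "d = c + int D" using cd by (auto simp: D_def)
  have step: "\<Delta> j = h * \<Delta> (j - 1)" if jj: "1 \<le> j" "j < D" for j
  proof -
    obtain i where i: "j = Suc i" using jj by (cases j) auto
    have "g j = p * g (Suc j) + q * g i"
      using rec[of "c + int j"] jj D i unfolding g_def by (auto simp: algebra_simps)
    then have "(p + q) * g j = p * g (Suc j) + q * g i" using pq by simp
    then have "p * (g (Suc j) - g j) = q * (g j - g i)"
      by (simp add: algebra_simps)
    then have "g (Suc j) - g j = q / p * (g j - g i)" using p by (simp add: field_simps)
    then show ?thesis using i by (simp add: \<Delta>_def h)
  qed
  have pow: "\<Delta> j = h ^ j * \<Delta> 0" if "j < D" for j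
    using that
  proof (induction j)
    case (Suc j) then show ?case using step[of "Suc j"] by simp
  qed simp
  have gsum: "g j = g 0 + \<Delta> 0 * (\<Sum>i<j. h ^ i)" if "j \<le> D" for j
    using that
  proof (induction j)
    case (Suc j)
    then have "g (Suc j) = g j + \<Delta> j" by (simp add: \<Delta>_def)
    then show ?case using Suc pow[of j] by (simp add: algebra_simps)
  qed simp
  have geo: "(\<Sum>i<j. h ^ i) = (1 - h ^ j) / (1 - h)" for j
    using h1 by (simp add: sum_gp_strict)
  have hD: "h ^ D < 1" using D h0 h1 by (simp add: power_less_one_iff)
  have yj: "y = c + int (nat (y - c))" "nat (y - c) \<le> D" using y cd unfolding D_def by auto
  have gd: "f d = f c + \<Delta> 0 * (1 - h ^ D) / (1 - h)"
    using gsum[of D] D by (simp add: g_def geo)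
  then have d0: "\<Delta> 0 = (f d - f c) * (1 - h) / (1 - h ^ D)"
    using hD h1 by (simp add: divide_simps) (simp add: algebra_simps)
  have "f y = g (nat (y - c))" using yj by (simp add: g_def)
  also have "\<dots> = f c + \<Delta> 0 * (1 - h ^ nat (y - c)) / (1 - h)"
    using gsum[OF yj(2)] by (simp add: g_def geo)
  also have "\<dots> = f c + (f d - f c) * (1 - h ^ nat (y - c)) / (1 - h ^ nat (d - c))"
    using hD h1 by (simp add: d0 D_def)
  finally show ?thesis .
qed


context rw begin

definition "h = q / p"
lemma h_pos: "0 < h" and h_lt1: "h < 1" and ph: "p * h = q"
  using q_pos qp p_pos by (auto simp: h_def)

lemma HB_sets[measurable]: "{s. HB c d y s} \<in> sets S"
  by (rule predS) measurable

lemma Pr_le1: "Pr P \<le> 1" unfolding Pr_def by (rule SS.prob_le_1)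
lemma Pr_nonneg: "0 \<le> Pr P" unfolding Pr_def by simp
lemma Pr_False[simp]: "Pr (\<lambda>s. False) = 0" unfolding Pr_def by simp
lemma Pr_True[simp]: "Pr (\<lambda>s. True) = 1" unfolding Pr_def by (metis SS.prob_space UNIV_def space_S)
lemma Pr_mono: "{s. Q s} \<in> sets S \<Longrightarrow> (\<And>s. P s \<Longrightarrow> Q s) \<Longrightarrow> Pr P \<le> Pr Q"
  unfolding Pr_def by (intro SS.finite_measure_mono) auto

lemma Pr_cong: "(\<And>s. P s = Q s) \<Longrightarrow> Pr P = Pr Q"
  unfolding Pr_def by metis

lemma HB_rec: assumes "c < y" "y < d" shows "Pr (HB c d y) = p * Pr (HB c d (y + 1)) + q * Pr (HB c d (y - 1))"
proof -
  have "Pr (HB c d y) = p * Pr (HB c d (y + 1)) + q * Pr (HB c d (y + -1))"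
    by (rule first_step[where Q="\<lambda>x. HB c d (y + x)"]) (use assms in \<open>auto simp: HB_Cons\<close>)
  then show ?thesis by simp
qed

lemma HB_rec': assumes "c < y" "y < d" shows "Pr (HB d c y) = p * Pr (HB d c (y + 1)) + q * Pr (HB d c (y - 1))"
proof -
  have "Pr (HB d c y) = p * Pr (HB d c (y + 1)) + q * Pr (HB d c (y + -1))"
    by (rule first_step[where Q="\<lambda>x. HB d c (y + x)"]) (use assms in \<open>auto simp: HB_Cons\<close>)
  then show ?thesis by simp
qed

lemma ruin:
  assumes "c < d" "c \<le> y" "y \<le> d"
  shows "Pr (HB c d y) = (1 - h ^ nat (y - c)) / (1 - h ^ nat (d - c))"
proof -
  have "Pr (HB c d y) = Pr (HB c d c) + (Pr (HB c d d) - Pr (HB c d c)) * (1 - h ^ nat (y - c)) / (1 - h ^ nat (d - c))"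
    by (rule recursion_solve[OF pq p_pos h_def h_pos h_lt1 HB_rec]) (use assms in auto)
  also have "Pr (HB c d c) = 0" using assms by (subst Pr_cong[where Q="\<lambda>s. False"]) auto
  also have "Pr (HB c d d) = 1" by (subst Pr_cong[where Q="\<lambda>s. True"]) auto
  finally show ?thesis by simp
qed

lemma ruin':
  assumes "c < d" "c \<le> y" "y \<le> d"
  shows "Pr (HB d c y) = 1 - (1 - h ^ nat (y - c)) / (1 - h ^ nat (d - c))"
proof -
  have "Pr (HB d c y) = Pr (HB d c c) + (Pr (HB d c d) - Pr (HB d c c)) * (1 - h ^ nat (y - c)) / (1 - h ^ nat (d - c))"
    by (rule recursion_solve[OF pq p_pos h_def h_pos h_lt1 HB_rec']) (use assms in auto)
  also have "Pr (HB d c d) = 0" using assms by (subst Pr_cong[where Q="\<lambda>s. False"]) auto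
  also have "Pr (HB d c c) = 1" by (subst Pr_cong[where Q="\<lambda>s. True"]) auto
  finally have "Pr (HB d c y) = 1 + (0 - 1) * (1 - h ^ nat (y - c)) / (1 - h ^ nat (d - c))" .
  then show ?thesis by (simp add: minus_divide_left)
qed

lemma below:
  assumes "y < d" "d < c"
  shows "Pr (HB c d y) = 1" "Pr (HB d c y) = 0"
proof -
  have "{s. HB d c y s} = {}"
  proof safe
    fix s assume "HB d c y s"
    then obtain m where m: "y + W s m = c" "\<forall>k<m. y + W s k \<noteq> d" unfolding HB_def by blast
    then show "s \<in> {}" using cont_below_end[OF assms(1) m(2)] assms by simp
  qed
  then show "Pr (HB d c y) = 0" by (simp add: Pr_def)
  define C where "C n = y - 1 - int n" for n
  have le: "Pr (HB (C n) d y) \<le> Pr (HB c d y)" for n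
  proof (rule Pr_mono[OF HB_sets])
    fix s assume "HB (C n) d y s"
    then obtain m where m: "y + W s m = d" "\<forall>k<m. y + W s k \<noteq> C n \<and> y + W s k \<noteq> d" unfolding HB_def by blast
    then have "\<forall>k<m. y + W s k < d" using cont_below[OF assms(1)] by blast
    then show "HB c d y s" unfolding HB_def using m assms by (intro exI[of _ m]) force
  qed
  have val: "Pr (HB (C n) d y) = (1 - h * h ^ n) / (1 - h ^ nat (d - y) * (h * h ^ n))" for n
  proof -
    have "nat (y - C n) = Suc n" "nat (d - C n) = nat (d - y) + Suc n" using assms by (auto simp: C_def)
    then show ?thesis using assms by (subst ruin) (auto simp: C_def power_add)
  qed
  have "(\<lambda>n. Pr (HB (C n) d y)) \<longlonglongrightarrow> (1 - h * 0) / (1 - h ^ nat (d - y) * (h * 0))"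
    unfolding val by (intro tendsto_intros LIMSEQ_realpow_zero) (use h_pos h_lt1 in auto)
  then have "1 \<le> Pr (HB c d y)" using le by (intro LIMSEQ_le_const2) auto
  then show "Pr (HB c d y) = 1" using Pr_le1 by (intro antisym)
qed

lemma above:
  assumes "c < d" "d < y"
  shows "Pr (HB c d y) = h ^ nat (y - d)" "Pr (HB d c y) = 0"
proof -
  have "{s. HB d c y s} = {}"
  proof safe
    fix s assume "HB d c y s"
    then obtain m where m: "y + W s m = c" "\<forall>k<m. y + W s k \<noteq> d" unfolding HB_def by blast
    then show "s \<in> {}" using cont_above_end[OF assms(2) m(2)] assms by simp
  qed
  then show "Pr (HB d c y) = 0" by (simp add: Pr_def)
  define A where "A n = {s. HB (y + 1 + int n) d y s}" for n
  have inc: "incseq A"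
  proof (rule incseq_SucI, safe)
    fix n s assume "s \<in> A n"
    then obtain m where m: "y + W s m = d" "\<forall>k<m. y + W s k \<noteq> y + 1 + int n \<and> y + W s k \<noteq> d"
      unfolding HB_def A_def by blast
    then have "\<forall>k<m. y + W s k < y + 1 + int n" using cont_below[of y "y + 1 + int n" m s] by auto
    then show "s \<in> A (Suc n)" unfolding A_def HB_def using m by (intro CollectI exI[of _ m]) force
  qed
  have U: "(\<Union>n. A n) = {s. HB c d y s}"
  proof safe
    fix n s assume "s \<in> A n"
    then obtain m where m: "y + W s m = d" "\<forall>k<m. y + W s k \<noteq> y + 1 + int n \<and> y + W s k \<noteq> d"
      unfolding HB_def A_def by blast
    then have "\<forall>k<m. y + W s k > d" using cont_above[OF assms(2)] by blast
    then show "HB c d y s" unfolding HB_def using m assms by (intro exI[of _ m]) force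
  next
    fix s assume "HB c d y s"
    then obtain m where m: "y + W s m = d" "\<forall>k<m. y + W s k \<noteq> c \<and> y + W s k \<noteq> d"
      unfolding HB_def by blast
    have "\<forall>k<m. y + W s k \<noteq> y + 1 + int m"
    proof (intro allI impI)
      fix k assume "k < m" then show "y + W s k \<noteq> y + 1 + int m" using W_bound[of s k] by auto
    qed
    then have "s \<in> A m" unfolding A_def HB_def using m by blast
    then show "s \<in> (\<Union>n. A n)" by blast
  qed
  have sets: "range A \<subseteq> sets S" unfolding A_def by auto
  have lim: "(\<lambda>n. measure S (A n)) \<longlonglongrightarrow> measure S (\<Union>n. A n)"
    by (rule SS.finite_Lim_measure_incseq[OF sets inc])
  have val: "measure S (A n) = 1 - (1 - h ^ nat (y - d)) / (1 - h ^ nat (y - d) * (h * h ^ n))" for n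
  proof -
    have "nat (y + 1 + int n - d) = nat (y - d) + Suc n" using assms by auto
    then show ?thesis using assms unfolding A_def Pr_def[symmetric]
      by (subst ruin') (auto simp: power_add)
  qed
  have "(\<lambda>n. measure S (A n)) \<longlonglongrightarrow> 1 - (1 - h ^ nat (y - d)) / (1 - h ^ nat (y - d) * (h * 0))"
    unfolding val by (intro tendsto_intros LIMSEQ_realpow_zero) (use h_pos h_lt1 in auto)
  then have "measure S (\<Union>n. A n) = 1 - (1 - h ^ nat (y - d)) / (1 - h ^ nat (y - d) * (h * 0))"
    using lim LIMSEQ_unique by blast
  then show "Pr (HB c d y) = h ^ nat (y - d)" by (simp add: U Pr_def)
qed

end

lemma card_eq_list: "(finite A \<and> card A = j) \<longleftrightarrow> (\<exists>xs. distinct xs \<and> length xs = j \<and> set xs = A)"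
  by (metis distinct_card finite_distinct_list finite_set)

lemma card_meas:
  assumes [measurable]: "\<And>k. Measurable.pred M (P k)"
  shows "Measurable.pred M (\<lambda>s. finite {k::nat. P k s} \<and> card {k. P k s} = j)"
proof -
  have "(\<lambda>s. finite {k::nat. P k s} \<and> card {k. P k s} = j) =
        (\<lambda>s. \<exists>xs. distinct xs \<and> length xs = j \<and> (\<forall>k. P k s = (k \<in> set xs)))"
    unfolding card_eq_list by (auto simp: set_eq_iff)
  also have "Measurable.pred M \<dots>" by measurable
  finally show ?thesis .
qed

lemma finite_meas:
  assumes [measurable]: "\<And>k. Measurable.pred M (P k)"
  shows "Measurable.pred M (\<lambda>s. finite {k::nat. P k s})"
proof -
  have "(\<lambda>s. finite {k::nat. P k s}) = (\<lambda>s. \<exists>n. \<forall>k. P k s \<longrightarrow> k < n)"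
    by (auto simp: finite_nat_set_iff_bounded)
  also have "Measurable.pred M \<dots>" by measurable
  finally show ?thesis .
qed

definition Zs :: "int \<Rightarrow> int \<Rightarrow> int stream \<Rightarrow> nat set" where
  "Zs x y s = {k. 1 \<le> k \<and> y + W s k = x}"
definition Vs :: "int \<Rightarrow> int \<Rightarrow> int stream \<Rightarrow> nat set" where
  "Vs c y s = {k. 1 \<le> k \<and> (y + W s k = 0 \<or> y + W s k = c)}"
definition FV :: "int \<Rightarrow> int \<Rightarrow> int stream \<Rightarrow> nat \<Rightarrow> int \<Rightarrow> bool" where
  "FV c y s n b \<longleftrightarrow> 1 \<le> n \<and> y + W s n = b \<and> (b = 0 \<or> b = c) \<and>
     (\<forall>k. 1 \<le> k \<and> k < n \<longrightarrow> y + W s k \<noteq> 0 \<and> y + W s k \<noteq> c)"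
definition Cnt :: "int \<Rightarrow> int \<Rightarrow> nat \<Rightarrow> nat \<Rightarrow> int stream \<Rightarrow> bool" where
  "Cnt c y j m s \<longleftrightarrow> finite (Zs 0 y s) \<and> card (Zs 0 y s) = j \<and> finite (Zs c y s) \<and> card (Zs c y s) = m"
definition Tot :: "int \<Rightarrow> int \<Rightarrow> nat \<Rightarrow> int stream \<Rightarrow> bool" where
  "Tot c y k s \<longleftrightarrow> finite (Vs c y s) \<and> card (Vs c y s) = k"
definition Esc :: "int \<Rightarrow> int \<Rightarrow> int stream \<Rightarrow> bool" where
  "Esc c y s \<longleftrightarrow> Vs c y s = {}"

lemma Vs_Zs: "Vs c y s = Zs 0 y s \<union> Zs c y s"
  by (auto simp: Vs_def Zs_def)

lemma FV_meas[measurable]: "Measurable.pred (stream_space (count_space UNIV)) (\<lambda>s. FV c y s n b)"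
  unfolding FV_def by measurable

lemma Cnt_meas[measurable]: "Measurable.pred (stream_space (count_space UNIV)) (Cnt c y j m)"
proof -
  have "Cnt c y j m = (\<lambda>s. (finite {k. 1 \<le> k \<and> y + W s k = 0} \<and> card {k. 1 \<le> k \<and> y + W s k = 0} = j) \<and>
     (finite {k. 1 \<le> k \<and> y + W s k = c} \<and> card {k. 1 \<le> k \<and> y + W s k = c} = m))"
    by (auto simp: Cnt_def Zs_def fun_eq_iff)
  also have "Measurable.pred (stream_space (count_space UNIV)) \<dots>"
    by (intro pred_intros_logic card_meas) measurable
  finally show ?thesis .
qed

lemma Tot_meas[measurable]: "Measurable.pred (stream_space (count_space UNIV)) (Tot c y k)"
  unfolding Tot_def Vs_def by (rule card_meas) measurable

lemma Esc_meas[measurable]: "Measurable.pred (stream_space (count_space UNIV)) (Esc c y)"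
proof -
  have "Esc c y = (\<lambda>s. \<forall>k. \<not> (1 \<le> k \<and> (y + W s k = 0 \<or> y + W s k = c)))"
    by (auto simp: Esc_def Vs_def fun_eq_iff)
  also have "Measurable.pred (stream_space (count_space UNIV)) \<dots>" by measurable
  finally show ?thesis .
qed

lemma FV_dep: "FV c y (stake n s @- t) n b = FV c y s n b"
  unfolding FV_def by (auto simp: W_shift_le)

lemma FV_unique: "FV c y s n b \<Longrightarrow> FV c y s n' b' \<Longrightarrow> n = n' \<and> b = b'"
proof -
  assume a: "FV c y s n b" "FV c y s n' b'"
  have "\<not> n < n'" using a unfolding FV_def by auto
  moreover have "\<not> n' < n" using a unfolding FV_def by auto
  ultimately have "n = n'" by simp
  then show ?thesis using a unfolding FV_def by auto
qed

lemma W_after: "n \<le> k \<Longrightarrow> y + W s k = (y + W s n) + W (sdrop n s) (k - n)"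
  by (simp add: W_sdrop)

lemma Zs_decomp:
  assumes "FV c y s n b" "c \<noteq> 0" "x = 0 \<or> x = c"
  shows "Zs x y s = (if b = x then {n} else {}) \<union> (\<lambda>k. k + n) ` Zs x b (sdrop n s)"
proof -
  have fv: "1 \<le> n" "y + W s n = b" "\<forall>k. 1 \<le> k \<and> k < n \<longrightarrow> y + W s k \<noteq> 0 \<and> y + W s k \<noteq> c"
    using assms(1) unfolding FV_def by auto
  show ?thesis
  proof (intro set_eqI iffI)
    fix k assume k: "k \<in> Zs x y s"
    then have k1: "1 \<le> k" "y + W s k = x" by (auto simp: Zs_def)
    then have "\<not> k < n" using fv assms(3) by auto
    then show "k \<in> (if b = x then {n} else {}) \<union> (\<lambda>k. k + n) ` Zs x b (sdrop n s)"
    proof (cases "k = n")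
      case False
      have "y + W s k = (y + W s n) + W (sdrop n s) (k - n)"
        by (rule W_after) (use \<open>\<not> k < n\<close> in simp)
      with False \<open>\<not> k < n\<close> have "k - n \<in> Zs x b (sdrop n s)"
        using k1 fv(2) unfolding Zs_def by simp
      moreover have "k = (k - n) + n" using \<open>\<not> k < n\<close> by simp
      ultimately show ?thesis by blast
    qed (use k1 fv in auto)
  next
    fix k assume "k \<in> (if b = x then {n} else {}) \<union> (\<lambda>k. k + n) ` Zs x b (sdrop n s)"
    then show "k \<in> Zs x y s"
    proof
      assume "k \<in> (if b = x then {n} else {})" then show ?thesis using fv by (auto simp: Zs_def split: if_splits)
    next
      assume "k \<in> (\<lambda>k. k + n) ` Zs x b (sdrop n s)"
      then obtain i where i: "k = i + n" "1 \<le> i" "b + W (sdrop n s) i = x" by (auto simp: Zs_def)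
      have "y + W s k = (y + W s n) + W (sdrop n s) (k - n)"
        by (rule W_after) (use i in simp)
      then show ?thesis using fv(1,2) i unfolding Zs_def by simp
    qed
  qed
qed

lemma Zs_card:
  assumes "FV c y s n b" "c \<noteq> 0" "x = 0 \<or> x = c"
  shows "finite (Zs x y s) \<longleftrightarrow> finite (Zs x b (sdrop n s))"
    and "finite (Zs x y s) \<Longrightarrow> card (Zs x y s) = (if b = x then 1 else 0) + card (Zs x b (sdrop n s))"
proof -
  have n: "1 \<le> n" using assms(1) by (simp add: FV_def)
  have inj: "inj_on (\<lambda>k. k + n) A" for A :: "nat set" by (auto simp: inj_on_def)
  have nn: "n \<notin> (\<lambda>k. k + n) ` Zs x b (sdrop n s)" by (auto simp: Zs_def)
  define D where "D = Zs x b (sdrop n s)"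
  define E :: "nat set" where "E = (if b = x then {n} else {})"
  have eq: "Zs x y s = E \<union> (\<lambda>k. k + n) ` D" unfolding D_def E_def by (rule Zs_decomp[OF assms])
  have fE: "finite E" by (simp add: E_def)
  have fi: "finite ((\<lambda>k. k + n) ` D) \<longleftrightarrow> finite D" by (rule finite_image_iff[OF inj])
  show "finite (Zs x y s) \<longleftrightarrow> finite (Zs x b (sdrop n s))"
    unfolding eq D_def[symmetric] using fE fi by simp
  have dj: "E \<inter> (\<lambda>k. k + n) ` D = {}" using nn unfolding E_def D_def by auto
  show "finite (Zs x y s) \<Longrightarrow> card (Zs x y s) = (if b = x then 1 else 0) + card (Zs x b (sdrop n s))"
  proof -
    assume "finite (Zs x y s)"
    then have fD: "finite ((\<lambda>k. k + n) ` D)" unfolding eq by simp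
    have "card (Zs x y s) = card E + card ((\<lambda>k. k + n) ` D)"
      unfolding eq by (rule card_Un_disjoint[OF fE fD dj])
    also have "card ((\<lambda>k. k + n) ` D) = card D" by (rule card_image[OF inj])
    also have "card E = (if b = x then 1 else 0)" by (simp add: E_def)
    finally show ?thesis by (simp add: D_def)
  qed
qed

lemma first_visit_exists:
  assumes "Vs c y s \<noteq> {}"
  shows "\<exists>n b. FV c y s n b"
proof -
  define n where "n = (LEAST k. k \<in> Vs c y s)"
  have "n \<in> Vs c y s" using assms unfolding n_def by (metis LeastI ex_in_conv)
  moreover have "\<And>k. k < n \<Longrightarrow> k \<notin> Vs c y s" unfolding n_def using not_less_Least by blast
  ultimately have "FV c y s n (y + W s n)" unfolding FV_def Vs_def by auto
  then show ?thesis by blast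
qed

lemma FV_Vs: "FV c y s n b \<Longrightarrow> Vs c y s \<noteq> {}"
  unfolding FV_def Vs_def by auto

lemma Cnt_decomp:
  assumes c: "c \<noteq> 0"
  shows "Cnt c y j m s \<longleftrightarrow>
    (Esc c y s \<and> j = 0 \<and> m = 0) \<or>
    (\<exists>n. FV c y s n 0 \<and> (0 < j \<and> Cnt c 0 (j - 1) m (sdrop n s))) \<or>
    (\<exists>n. FV c y s n c \<and> (0 < m \<and> Cnt c c j (m - 1) (sdrop n s)))"
proof (cases "Esc c y s")
  case True
  then have "Zs 0 y s = {}" "Zs c y s = {}" by (auto simp: Esc_def Vs_Zs)
  moreover have "\<not> FV c y s n b" for n b using True FV_Vs by (auto simp: Esc_def)
  ultimately show ?thesis using True by (auto simp: Cnt_def)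
next
  case False
  then have "Vs c y s \<noteq> {}" by (simp add: Esc_def)
  then obtain n b where fv: "FV c y s n b" using first_visit_exists by blast
  then have b: "b = 0 \<or> b = c" by (auto simp: FV_def)
  have uq: "FV c y s n' b' \<longleftrightarrow> n' = n \<and> b' = b" for n' b' using FV_unique fv by blast
  note z0 = Zs_card[OF fv c, of 0] and zc = Zs_card[OF fv c, of c]
  show ?thesis
  proof (cases "b = 0")
    case True
    then show ?thesis using False c z0 zc unfolding uq by (auto simp: Cnt_def)
  next
    case b0: False
    then have "b = c" using b by simp
    then show ?thesis using False c z0 zc b0 unfolding uq by (auto simp: Cnt_def)
  qed
qed

lemma Tot_Cnt:
  assumes c: "c \<noteq> 0"
  shows "Tot c y k s \<longleftrightarrow> (\<exists>j\<le>k. Cnt c y j (k - j) s)"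
proof -
  have disj: "Zs 0 y s \<inter> Zs c y s = {}" using c by (auto simp: Zs_def)
  show ?thesis
    unfolding Tot_def Cnt_def Vs_Zs using card_Un_disjoint[OF _ _ disj]
    by (auto intro!: exI[of _ "card (Zs 0 y s)"])
qed

context rw begin

lemma sets_pred: "{s. P s} \<in> sets S" if "Measurable.pred (stream_space (count_space UNIV)) P"
  using predS[OF that] .

lemma sets_shift: "{s. Q s} \<in> sets S \<Longrightarrow> {s. Q (sdrop n s)} \<in> sets S"
proof -
  assume "{s. Q s} \<in> sets S"
  then have "sdrop n -` {s. Q s} \<inter> space S \<in> sets S" by (intro measurable_sets[OF measurable_sdrop])
  then show ?thesis by (simp add: vimage_def)
qed

lemma Pr_disj: "{s. P s} \<in> sets S \<Longrightarrow> {s. Q s} \<in> sets S \<Longrightarrow> (\<And>s. P s \<Longrightarrow> Q s \<Longrightarrow> False) \<Longrightarrow>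
  Pr (\<lambda>s. P s \<or> Q s) = Pr P + Pr Q"
proof -
  assume a: "{s. P s} \<in> sets S" "{s. Q s} \<in> sets S" "\<And>s. P s \<Longrightarrow> Q s \<Longrightarrow> False"
  have "{s. P s \<or> Q s} = {s. P s} \<union> {s. Q s}" by auto
  then show ?thesis unfolding Pr_def using a by (simp add: SS.finite_measure_Union) (metis SS.finite_measure_Union disjoint_iff mem_Collect_eq)
qed

lemma strong_markov:
  assumes F: "\<And>n. {s. F n s} \<in> sets S" and Q: "{s. Q s} \<in> sets S"
  and dep: "\<And>n s t. F n (stake n s @- t) = F n s"
  and disj: "\<And>n n' s. F n s \<Longrightarrow> F n' s \<Longrightarrow> n = n'"
  shows "Pr (\<lambda>s. \<exists>n. F n s \<and> Q (sdrop n s)) = Pr (\<lambda>s. \<exists>n. F n s) * Pr Q"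
proof -
  define A where "A n = {s. F n s \<and> Q (sdrop n s)}" for n
  define B where "B n = {s. F n s}" for n
  have As: "range A \<subseteq> sets S"
  proof -
    have "A n = {s. F n s} \<inter> {s. Q (sdrop n s)}" for n unfolding A_def by auto
    then show ?thesis using F sets_shift[OF Q] by auto
  qed
  have Bs: "range B \<subseteq> sets S" unfolding B_def using F by auto
  have dA: "disjoint_family A" "disjoint_family B" unfolding A_def B_def disjoint_family_on_def using disj by auto
  have "(\<lambda>n. measure S (A n)) sums measure S (\<Union>n. A n)" by (rule SS.finite_measure_UNION[OF As dA(1)])
  moreover have "measure S (A n) = measure S (B n) * Pr Q" for n
    unfolding A_def B_def using shift_prod[OF F Q dep] by (simp add: Pr_def)
  moreover have "(\<lambda>n. measure S (B n)) sums measure S (\<Union>n. B n)" by (rule SS.finite_measure_UNION[OF Bs dA(2)])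
  ultimately have "(\<lambda>n. measure S (B n) * Pr Q) sums measure S (\<Union>n. A n)"
    "(\<lambda>n. measure S (B n) * Pr Q) sums (measure S (\<Union>n. B n) * Pr Q)"
    by (auto intro: sums_mult2)
  then have "measure S (\<Union>n. A n) = measure S (\<Union>n. B n) * Pr Q" using sums_unique2 by blast
  moreover have "(\<Union>n. A n) = {s. \<exists>n. F n s \<and> Q (sdrop n s)}" "(\<Union>n. B n) = {s. \<exists>n. F n s}"
    unfolding A_def B_def by auto
  ultimately show ?thesis by (simp add: Pr_def)
qed

definition "rr c y b = Pr (\<lambda>s. \<exists>n. FV c y s n b)"
definition "ee c y = Pr (Esc c y)"

lemma Pr_FV_shift:
  assumes "{s. Q s} \<in> sets S"
  shows "Pr (\<lambda>s. \<exists>n. FV c y s n b \<and> Q (sdrop n s)) = rr c y b * Pr Q"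
  unfolding rr_def
  by (rule strong_markov[OF _ assms]) (auto intro: sets_pred simp: FV_dep dest: FV_unique)

lemma Cnt_rec:
  assumes c: "c \<noteq> 0"
  shows "Pr (Cnt c y j m) = (if j = 0 \<and> m = 0 then ee c y else 0)
     + (if 0 < j then rr c y 0 * Pr (Cnt c 0 (j - 1) m) else 0)
     + (if 0 < m then rr c y c * Pr (Cnt c c j (m - 1)) else 0)"
proof -
  let ?A = "\<lambda>s. Esc c y s \<and> j = 0 \<and> m = 0"
  let ?B = "\<lambda>s. \<exists>n. FV c y s n 0 \<and> (0 < j \<and> Cnt c 0 (j - 1) m (sdrop n s))"
  let ?C = "\<lambda>s. \<exists>n. FV c y s n c \<and> (0 < m \<and> Cnt c c j (m - 1) (sdrop n s))"
  have mA: "{s. ?A s} \<in> sets S" by (rule sets_pred) measurable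
  have mB: "{s. ?B s} \<in> sets S" by (rule sets_pred) measurable
  have mC: "{s. ?C s} \<in> sets S" by (rule sets_pred) measurable
  have "Pr (Cnt c y j m) = Pr (\<lambda>s. (?A s \<or> ?B s) \<or> ?C s)"
    by (rule Pr_cong) (use Cnt_decomp[OF c] in blast)
  also have "\<dots> = Pr (\<lambda>s. ?A s \<or> ?B s) + Pr ?C"
  proof (rule Pr_disj)
    show "{s. ?A s \<or> ?B s} \<in> sets S" by (rule sets_pred) measurable
  next
    fix s assume "?A s \<or> ?B s" "?C s" then show False
      using FV_unique c by (metis Esc_def FV_Vs)
  qed fact
  also have "Pr (\<lambda>s. ?A s \<or> ?B s) = Pr ?A + Pr ?B"
    by (rule Pr_disj[OF mA mB]) (metis Esc_def FV_Vs)
  also have "Pr ?A = (if j = 0 \<and> m = 0 then ee c y else 0)"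
    by (auto simp: ee_def)
  also have "Pr ?B = (if 0 < j then rr c y 0 * Pr (Cnt c 0 (j - 1) m) else 0)"
  proof (cases "0 < j")
    case True then show ?thesis using Pr_FV_shift[of "Cnt c 0 (j - 1) m" c y 0] by (simp add: sets_pred)
  qed simp
  also have "Pr ?C = (if 0 < m then rr c y c * Pr (Cnt c c j (m - 1)) else 0)"
  proof (cases "0 < m")
    case True then show ?thesis using Pr_FV_shift[of "Cnt c c j (m - 1)" c y c] by (simp add: sets_pred)
  qed simp
  finally show ?thesis .
qed

lemma Tot_sum:
  assumes c: "c \<noteq> 0"
  shows "Pr (Tot c y k) = (\<Sum>j\<le>k. Pr (Cnt c y j (k - j)))"
proof -
  have "Pr (Tot c y k) = measure S (\<Union>j\<in>{..k}. {s. Cnt c y j (k - j) s})"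
    unfolding Pr_def using Tot_Cnt[OF c] by (intro arg_cong[where f="measure S"]) auto
  also have "\<dots> = (\<Sum>j\<le>k. measure S {s. Cnt c y j (k - j) s})"
  proof (rule SS.finite_measure_finite_Union)
    show "disjoint_family_on (\<lambda>j. {s. Cnt c y j (k - j) s}) {..k}"
      unfolding disjoint_family_on_def Cnt_def by auto
  qed (auto intro: sets_pred)
  finally show ?thesis by (simp add: Pr_def)
qed

end

lemma FV_Cons:
  assumes "b = 0 \<or> b = c" "b' = (if b = 0 then c else 0)" "c \<noteq> 0"
  shows "(\<exists>n. FV c y (x ## s) n b) \<longleftrightarrow> HB b' b (y + stp x) s"
proof
  assume "\<exists>n. FV c y (x ## s) n b"
  then obtain n where fv: "FV c y (x ## s) n b" by blast
  then obtain m where n: "n = Suc m" unfolding FV_def by (cases n) auto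
  have "y + stp x + W s m = b" using fv n by (simp add: FV_def algebra_simps)
  moreover have "\<forall>k<m. y + stp x + W s k \<noteq> b' \<and> y + stp x + W s k \<noteq> b"
  proof (intro allI impI)
    fix k assume "k < m"
    then have "y + W (x ## s) (Suc k) \<noteq> 0 \<and> y + W (x ## s) (Suc k) \<noteq> c"
      using fv n unfolding FV_def by auto
    then show "y + stp x + W s k \<noteq> b' \<and> y + stp x + W s k \<noteq> b" using assms by (auto simp: algebra_simps)
  qed
  ultimately show "HB b' b (y + stp x) s" unfolding HB_def by blast
next
  assume "HB b' b (y + stp x) s"
  then obtain m where m: "y + stp x + W s m = b" "\<forall>k<m. y + stp x + W s k \<noteq> b' \<and> y + stp x + W s k \<noteq> b"
    unfolding HB_def by blast
  have "\<forall>k. 1 \<le> k \<and> k < Suc m \<longrightarrow> y + W (x ## s) k \<noteq> 0 \<and> y + W (x ## s) k \<noteq> c"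
  proof (intro allI impI)
    fix k assume k: "1 \<le> k \<and> k < Suc m"
    then obtain k' where "k = Suc k'" "k' < m" by (cases k) auto
    then show "y + W (x ## s) k \<noteq> 0 \<and> y + W (x ## s) k \<noteq> c" using m assms by (auto simp: algebra_simps)
  qed
  then have "FV c y (x ## s) (Suc m) b" unfolding FV_def using m assms by (auto simp: algebra_simps)
  then show "\<exists>n. FV c y (x ## s) n b" by blast
qed

definition NH :: "int \<Rightarrow> int \<Rightarrow> int stream \<Rightarrow> bool" where
  "NH c y s \<longleftrightarrow> (\<forall>m. y + W s m \<noteq> 0 \<and> y + W s m \<noteq> c)"

lemma NH_meas[measurable]: "Measurable.pred (stream_space (count_space UNIV)) (NH c y)"
  unfolding NH_def by measurable

lemma Esc_Cons: "Esc c y (x ## s) \<longleftrightarrow> NH c (y + stp x) s"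
proof -
  have "Esc c y (x ## s) \<longleftrightarrow> (\<forall>k. 1 \<le> k \<longrightarrow> y + W (x ## s) k \<noteq> 0 \<and> y + W (x ## s) k \<noteq> c)"
    by (auto simp: Esc_def Vs_def)
  also have "\<dots> \<longleftrightarrow> (\<forall>m. y + W (x ## s) (Suc m) \<noteq> 0 \<and> y + W (x ## s) (Suc m) \<noteq> c)"
  proof (intro iffI allI impI)
    fix k :: nat assume a: "\<forall>m. y + W (x ## s) (Suc m) \<noteq> 0 \<and> y + W (x ## s) (Suc m) \<noteq> c" "1 \<le> k"
    then obtain m where "k = Suc m" by (cases k) auto
    then show "y + W (x ## s) k \<noteq> 0 \<and> y + W (x ## s) k \<noteq> c" using a by simp
  next
    fix m assume a: "\<forall>k. 1 \<le> k \<longrightarrow> y + W (x ## s) k \<noteq> 0 \<and> y + W (x ## s) k \<noteq> c"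
    show "y + W (x ## s) (Suc m) \<noteq> 0 \<and> y + W (x ## s) (Suc m) \<noteq> c"
      using a[rule_format, of "Suc m"] by simp
  qed
  also have "\<dots> \<longleftrightarrow> NH c (y + stp x) s" by (simp add: NH_def algebra_simps)
  finally show ?thesis .
qed

lemma NH_split:
  assumes "c \<noteq> 0"
  shows "NH c y s \<or> HB c 0 y s \<or> HB 0 c y s"
    and "\<not> (NH c y s \<and> HB c 0 y s)" "\<not> (NH c y s \<and> HB 0 c y s)" "\<not> (HB c 0 y s \<and> HB 0 c y s)"
proof -
  show "NH c y s \<or> HB c 0 y s \<or> HB 0 c y s"
  proof (cases "NH c y s")
    case False
    then obtain m where "y + W s m = 0 \<or> y + W s m = c" unfolding NH_def by blast
    then have ex: "\<exists>m. y + W s m = 0 \<or> y + W s m = c" by blast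
    define n where "n = (LEAST m. y + W s m = 0 \<or> y + W s m = c)"
    have n1: "y + W s n = 0 \<or> y + W s n = c" unfolding n_def by (rule LeastI_ex[OF ex])
    have n2: "\<forall>k<n. y + W s k \<noteq> 0 \<and> y + W s k \<noteq> c" unfolding n_def using not_less_Least by blast
    from n1 n2 show ?thesis unfolding HB_def by blast
  qed simp
  show "\<not> (NH c y s \<and> HB c 0 y s)" "\<not> (NH c y s \<and> HB 0 c y s)" unfolding NH_def HB_def by blast+
  show "\<not> (HB c 0 y s \<and> HB 0 c y s)"
  proof
    assume "HB c 0 y s \<and> HB 0 c y s"
    then obtain m m' where m: "y + W s m = 0" "\<forall>k<m. y + W s k \<noteq> c \<and> y + W s k \<noteq> 0"
      and m': "y + W s m' = c" "\<forall>k<m'. y + W s k \<noteq> 0 \<and> y + W s k \<noteq> c" unfolding HB_def by blast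
    show False using m m' assms by (metis linorder_neqE_nat)
  qed
qed

context rw begin

lemma Pr_NH:
  assumes "c \<noteq> 0"
  shows "Pr (NH c y) = 1 - Pr (HB c 0 y) - Pr (HB 0 c y)"
proof -
  have "1 = Pr (\<lambda>s. (NH c y s \<or> HB c 0 y s) \<or> HB 0 c y s)"
    using NH_split(1)[OF assms] by (subst Pr_cong[where Q="\<lambda>s. True"]) auto
  also have "\<dots> = Pr (\<lambda>s. NH c y s \<or> HB c 0 y s) + Pr (HB 0 c y)"
    using NH_split[OF assms] by (intro Pr_disj sets_pred) (auto; measurable)+
  also have "Pr (\<lambda>s. NH c y s \<or> HB c 0 y s) = Pr (NH c y) + Pr (HB c 0 y)"
    using NH_split[OF assms] by (intro Pr_disj sets_pred) (auto; measurable)+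
  finally show ?thesis by simp
qed

lemma rr_eq:
  assumes "c \<noteq> 0" "b = 0 \<or> b = c" "b' = (if b = 0 then c else 0)"
  shows "rr c y b = p * Pr (HB b' b (y + 1)) + q * Pr (HB b' b (y - 1))"
proof -
  have "rr c y b = p * Pr (HB b' b (y + 1)) + q * Pr (HB b' b (y + -1))"
    unfolding rr_def
    by (rule first_step[where Q="\<lambda>x. HB b' b (y + x)"]) (auto intro!: sets_pred simp: FV_Cons[OF assms(2,3,1)])
  then show ?thesis by simp
qed

lemma ee_eq:
  assumes "c \<noteq> 0"
  shows "ee c y = p * (1 - Pr (HB c 0 (y + 1)) - Pr (HB 0 c (y + 1))) + q * (1 - Pr (HB c 0 (y - 1)) - Pr (HB 0 c (y - 1)))"
proof -
  have "ee c y = p * Pr (NH c (y + 1)) + q * Pr (NH c (y + -1))"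
    unfolding ee_def
    by (rule first_step[where Q="\<lambda>x. NH c (y + x)"]) (auto intro!: sets_pred simp: Esc_Cons)
  then show ?thesis by (simp add: Pr_NH[OF assms])
qed

context fixes z :: nat assumes z: "z > 0" begin

abbreviation "H \<equiv> h ^ z"
abbreviation "g \<equiv> h ^ (z - 1)"

lemma Hg: "H = h * g" using z by (cases z) auto

lemma pos_vals:
  "rr (int z) 0 0 = p * (1 - (1 - h) / (1 - H)) + q"
  "rr (int z) 0 (int z) = p * ((1 - h) / (1 - H))"
  "rr (int z) (int z) (int z) = p * h + q * ((1 - g) / (1 - H))"
  "rr (int z) (int z) 0 = q * (1 - (1 - g) / (1 - H))"
  "ee (int z) 0 = 0"
  "ee (int z) (int z) = p * (1 - h)"
proof -
  have zz: "int z \<noteq> 0" using z by simp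
  have n1: "nat (int z - 1 - 0) = z - 1" "nat (int z - 0) = z" "nat (1 - 0) = 1" "nat (int z + 1 - int z) = 1"
    using z by auto
  have r1: "Pr (HB (int z) 0 1) = 1 - (1 - h) / (1 - H)" using ruin'[of 0 "int z" 1] z n1 by simp
  have r2: "Pr (HB 0 (int z) 1) = (1 - h) / (1 - H)" using ruin[of 0 "int z" 1] z n1 by simp
  have r3: "Pr (HB (int z) 0 (-1)) = 1" "Pr (HB 0 (int z) (-1)) = 0" using below[of "-1" 0 "int z"] z by auto
  have r4: "Pr (HB 0 (int z) (int z + 1)) = h" "Pr (HB (int z) 0 (int z + 1)) = 0"
    using above[of 0 "int z" "int z + 1"] z n1 by auto
  have r5: "Pr (HB 0 (int z) (int z - 1)) = (1 - g) / (1 - H)" using ruin[of 0 "int z" "int z - 1"] z n1 by simp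
  have r6: "Pr (HB (int z) 0 (int z - 1)) = 1 - (1 - g) / (1 - H)" using ruin'[of 0 "int z" "int z - 1"] z n1 by simp
  show "rr (int z) 0 0 = p * (1 - (1 - h) / (1 - H)) + q"
    using rr_eq[OF zz, of 0 "int z" 0] r1 r3 by simp
  show "rr (int z) 0 (int z) = p * ((1 - h) / (1 - H))"
    using rr_eq[OF zz, of "int z" 0 0] r2 r3 zz by simp
  show "rr (int z) (int z) (int z) = p * h + q * ((1 - g) / (1 - H))"
    using rr_eq[OF zz, of "int z" 0 "int z"] r4 r5 zz by simp
  show "rr (int z) (int z) 0 = q * (1 - (1 - g) / (1 - H))"
    using rr_eq[OF zz, of 0 "int z" "int z"] r4 r6 zz by simp
  show "ee (int z) 0 = 0"
    using ee_eq[OF zz, of 0] r1 r2 r3 by simp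
  show "ee (int z) (int z) = p * (1 - h)"
    using ee_eq[OF zz, of "int z"] r4 r5 r6 by simp
qed

lemma neg_vals:
  "rr (- int z) 0 0 = p * h + q * ((1 - g) / (1 - H))"
  "rr (- int z) 0 (- int z) = q * (1 - (1 - g) / (1 - H))"
  "rr (- int z) (- int z) (- int z) = p * (1 - (1 - h) / (1 - H)) + q"
  "rr (- int z) (- int z) 0 = p * ((1 - h) / (1 - H))"
  "ee (- int z) 0 = p * (1 - h)"
  "ee (- int z) (- int z) = 0"
proof -
  have zz: "- int z \<noteq> 0" using z by simp
  have n1: "nat (- 1 - - int z) = z - 1" "nat (0 - - int z) = z" "nat (- int z + 1 - - int z) = 1" "nat (1 - 0) = 1"
    using z by auto
  have r1: "Pr (HB (- int z) 0 1) = h" "Pr (HB 0 (- int z) 1) = 0" using above[of "- int z" 0 1] z by auto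
  have r2: "Pr (HB (- int z) 0 (-1)) = (1 - g) / (1 - H)" using ruin[of "- int z" 0 "-1"] z n1 by simp
  have r3: "Pr (HB 0 (- int z) (-1)) = 1 - (1 - g) / (1 - H)" using ruin'[of "- int z" 0 "-1"] z n1 by simp
  have r4: "Pr (HB 0 (- int z) (- int z + 1)) = 1 - (1 - h) / (1 - H)" using ruin'[of "- int z" 0 "- int z + 1"] z n1 by simp
  have r5: "Pr (HB (- int z) 0 (- int z + 1)) = (1 - h) / (1 - H)" using ruin[of "- int z" 0 "- int z + 1"] z n1 by simp
  have r6: "Pr (HB 0 (- int z) (- int z - 1)) = 1" "Pr (HB (- int z) 0 (- int z - 1)) = 0"
    using below[of "- int z - 1" "- int z" 0] z by auto
  show "rr (- int z) 0 0 = p * h + q * ((1 - g) / (1 - H))"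
    using rr_eq[OF zz, of 0 "- int z" 0] r1 r2 by simp
  show "rr (- int z) 0 (- int z) = q * (1 - (1 - g) / (1 - H))"
    using rr_eq[OF zz, of "- int z" 0 0] r1 r3 zz by simp
  show "rr (- int z) (- int z) (- int z) = p * (1 - (1 - h) / (1 - H)) + q"
    using rr_eq[OF zz, of "- int z" 0 "- int z"] r4 r6 zz by simp
  show "rr (- int z) (- int z) 0 = p * ((1 - h) / (1 - H))"
    using rr_eq[OF zz, of 0 "- int z" "- int z"] r5 r6 zz by simp
  show "ee (- int z) 0 = p * (1 - h)"
    using ee_eq[OF zz, of 0] r1 r2 r3 by simp
  show "ee (- int z) (- int z) = 0"
    using ee_eq[OF zz, of "- int z"] r4 r5 r6 by simp
qed

end
end

lemma conv_unfold:
  fixes x b :: "nat \<Rightarrow> real"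
  assumes rec: "\<And>m. x m = b m + (if 0 < m then a * x (m - 1) else 0)"
  shows "x m = (\<Sum>i\<le>m. a ^ i * b (m - i))"
proof (induction m)
  case 0 then show ?case using rec[of 0] by simp
next
  case (Suc m)
  have "x (Suc m) = b (Suc m) + a * x m" using rec[of "Suc m"] by simp
  also have "\<dots> = b (Suc m) + (\<Sum>i\<le>m. a ^ Suc i * b (m - i))"
    by (simp add: Suc sum_distrib_left mult.assoc)
  also have "\<dots> = (\<Sum>i\<le>Suc m. a ^ i * b (Suc m - i))"
    by (subst sum.atMost_Suc_shift) simp
  finally show ?case .
qed

lemma conv_geo:
  fixes x b :: "nat \<Rightarrow> real" and a w B :: real
  assumes rec: "\<And>m. x m = b m + (if 0 < m then a * x (m - 1) else 0)"
    and a: "0 \<le> a" and w: "0 \<le> w" and aw: "a * w < 1"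
    and bnn: "\<And>m. 0 \<le> b m" and bs: "(\<lambda>m. w ^ m * b m) sums B"
  shows "(\<lambda>m. w ^ m * x m) sums (B / (1 - a * w))"
proof -
  have eq: "w ^ m * x m = (\<Sum>i\<le>m. (a * w) ^ i * (w ^ (m - i) * b (m - i)))" for m
  proof -
    have "w ^ m * x m = (\<Sum>i\<le>m. w ^ m * (a ^ i * b (m - i)))"
      by (simp add: conv_unfold[OF rec] sum_distrib_left)
    also have "\<dots> = (\<Sum>i\<le>m. (a * w) ^ i * (w ^ (m - i) * b (m - i)))"
    proof (rule sum.cong)
      fix i assume "i \<in> {..m}"
      then have "w ^ m = w ^ i * w ^ (m - i)" by (simp flip: power_add)
      then show "w ^ m * (a ^ i * b (m - i)) = (a * w) ^ i * (w ^ (m - i) * b (m - i))"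
        by (simp add: power_mult_distrib)
    qed simp
    finally show ?thesis .
  qed
  have aw0: "0 \<le> a * w" using a w by simp
  have s1: "summable (\<lambda>k. norm ((a * w) ^ k))" using aw0 aw by (simp add: summable_geometric)
  have s2: "summable (\<lambda>k. norm (w ^ k * b k))" using bs bnn w by (simp add: sums_summable)
  have "(\<lambda>k. \<Sum>i\<le>k. (a * w) ^ i * (w ^ (k - i) * b (k - i))) sums ((\<Sum>k. (a * w) ^ k) * (\<Sum>k. w ^ k * b k))"
    by (rule Cauchy_product_sums[OF s1 s2])
  moreover have "(\<Sum>k. (a * w) ^ k) = 1 / (1 - a * w)" using aw0 aw by (simp add: suminf_geometric)
  moreover have "(\<Sum>k. w ^ k * b k) = B" using sums_unique[OF bs] by simp
  ultimately show ?thesis by (simp add: eq[symmetric])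
qed

lemma sums_delta0: "(\<lambda>m. w ^ m * (if j = (0::nat) \<and> m = 0 then e else 0)) sums (if j = 0 then e else (0::real))"
proof -
  have "(\<lambda>m. w ^ m * (if j = (0::nat) \<and> m = 0 then e else 0)) = (\<lambda>m. if m = 0 then (if j = 0 then e else 0) else 0)"
    by auto
  then show ?thesis using sums_single[of 0 "\<lambda>_. if j = 0 then e else (0::real)"] by simp
qed

locale gen2 =
  fixes P0 Pc :: "nat \<Rightarrow> nat \<Rightarrow> real" and e0 ec a00 a0c ac0 acc :: real
  assumes rec0: "\<And>j m. P0 j m = (if j = 0 \<and> m = 0 then e0 else 0) + (if 0 < j then a00 * P0 (j - 1) m else 0)
                        + (if 0 < m then a0c * Pc j (m - 1) else 0)"
    and recc: "\<And>j m. Pc j m = (if j = 0 \<and> m = 0 then ec else 0) + (if 0 < j then ac0 * P0 (j - 1) m else 0)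
                        + (if 0 < m then acc * Pc j (m - 1) else 0)"
begin

lemma gen_step:
  assumes nn: "\<And>j m. 0 \<le> P0 j m" "\<And>j m. 0 \<le> Pc j m"
    and par: "0 \<le> ec" "0 \<le> ac0" "0 \<le> acc"
    and w: "0 < w" and aw: "acc * w < 1"
    and bsum: "(\<lambda>m. w ^ m * ((if j = 0 \<and> m = 0 then ec else 0) + (if 0 < j then ac0 * P0 (j - 1) m else 0))) sums Bj"
    and asum: "(\<lambda>m. w ^ m * ((if j = 0 \<and> m = 0 then e0 else 0) + (if 0 < j then a00 * P0 (j - 1) m else 0))) sums Aj"
  shows "(\<lambda>m. w ^ m * P0 j m) sums (Aj + a0c * w * (Bj / (1 - acc * w)))"
proof -
  let ?K = "1 - acc * w"
  have G: "(\<lambda>m. w ^ m * Pc j m) sums (Bj / ?K)"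
  proof (rule conv_geo[where b="\<lambda>m. (if j = 0 \<and> m = 0 then ec else 0) + (if 0 < j then ac0 * P0 (j - 1) m else 0)"])
    show "Pc j m = (if j = 0 \<and> m = 0 then ec else 0) + (if 0 < j then ac0 * P0 (j - 1) m else 0) + (if 0 < m then acc * Pc j (m - 1) else 0)" for m
      by (rule recc)
    show "0 \<le> (if j = 0 \<and> m = 0 then ec else 0) + (if 0 < j then ac0 * P0 (j - 1) m else 0)" for m
      using par nn(1)[of "j - 1" m] by simp
  qed (use par w aw bsum in auto)
  have sh: "(\<lambda>m. w ^ m * (if 0 < m then a0c * Pc j (m - 1) else 0)) sums (a0c * w * (Bj / ?K))"
  proof -
    have "(\<lambda>m. (a0c * w) * (w ^ m * Pc j m)) sums (a0c * w * (Bj / ?K))" by (rule sums_mult[OF G])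
    then have "(\<lambda>m. (\<lambda>m. w ^ m * (if 0 < m then a0c * Pc j (m - 1) else 0)) (Suc m)) sums (a0c * w * (Bj / ?K))"
      by (simp add: algebra_simps)
    then show ?thesis by (subst (asm) sums_Suc_iff) simp
  qed
  show ?thesis
    using sums_add[OF asum sh] by (subst rec0) (simp add: algebra_simps)
qed

lemma gen_sum:
  assumes nn: "\<And>j m. 0 \<le> P0 j m" "\<And>j m. 0 \<le> Pc j m"
    and par: "0 \<le> ec" "0 \<le> ac0" "0 \<le> acc"
    and w: "0 < w" and aw: "acc * w < 1"
  shows "(\<lambda>m. w ^ m * P0 j m) sums ((e0 + a0c * w * ec / (1 - acc * w)) * (a00 + a0c * w * ac0 / (1 - acc * w)) ^ j)"
proof (induction j)
  case 0
  have "(\<lambda>m. w ^ m * P0 0 m) sums (e0 + a0c * w * (ec / (1 - acc * w)))"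
    by (rule gen_step[OF nn par w aw]) (use sums_delta0[of w 0] in simp_all)
  then show ?case by simp
next
  case (Suc j)
  have "(\<lambda>m. w ^ m * P0 (Suc j) m) sums
     (a00 * ((e0 + a0c * w * ec / (1 - acc * w)) * (a00 + a0c * w * ac0 / (1 - acc * w)) ^ j) +
      a0c * w * (ac0 * ((e0 + a0c * w * ec / (1 - acc * w)) * (a00 + a0c * w * ac0 / (1 - acc * w)) ^ j) / (1 - acc * w)))"
  proof (rule gen_step[OF nn par w aw])
    show "(\<lambda>m. w ^ m * ((if Suc j = 0 \<and> m = 0 then ec else 0) + (if 0 < Suc j then ac0 * P0 (Suc j - 1) m else 0))) sums
      (ac0 * ((e0 + a0c * w * ec / (1 - acc * w)) * (a00 + a0c * w * ac0 / (1 - acc * w)) ^ j))"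
      using sums_mult[OF Suc, of ac0] by (simp add: algebra_simps)
    show "(\<lambda>m. w ^ m * ((if Suc j = 0 \<and> m = 0 then e0 else 0) + (if 0 < Suc j then a00 * P0 (Suc j - 1) m else 0))) sums
      (a00 * ((e0 + a0c * w * ec / (1 - acc * w)) * (a00 + a0c * w * ac0 / (1 - acc * w)) ^ j))"
      using sums_mult[OF Suc, of a00] by (simp add: algebra_simps)
  qed
  then show ?case by (simp add: algebra_simps)
qed

definition "T0 k = (\<Sum>j\<le>k. P0 j (k - j))"
definition "Tc k = (\<Sum>j\<le>k. Pc j (k - j))"

lemma tot_rec_gen:
  fixes P :: "nat \<Rightarrow> nat \<Rightarrow> real"
  assumes rec: "\<And>j m. P j m = (if j = 0 \<and> m = 0 then e else 0) + (if 0 < j then a * P0 (j - 1) m else 0)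
                        + (if 0 < m then b * Pc j (m - 1) else 0)"
  shows "(\<Sum>j\<le>0. P j (0 - j)) = e"
    and "(\<Sum>j\<le>Suc k. P j (Suc k - j)) = a * T0 k + b * Tc k"
proof -
  show "(\<Sum>j\<le>0. P j (0 - j)) = e" using rec[of 0 0] by simp
  have "(\<Sum>j\<le>Suc k. P j (Suc k - j)) =
     (\<Sum>j\<le>Suc k. (if 0 < j then a * P0 (j - 1) (Suc k - j) else 0)) +
     (\<Sum>j\<le>Suc k. (if 0 < Suc k - j then b * Pc j (Suc k - j - 1) else 0))"
    by (subst rec) (simp add: sum.distrib)
  also have "(\<Sum>j\<le>Suc k. (if 0 < j then a * P0 (j - 1) (Suc k - j) else 0)) = a * T0 k"
    by (subst sum.atMost_Suc_shift) (simp add: T0_def sum_distrib_left)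
  also have "(\<Sum>j\<le>Suc k. (if 0 < Suc k - j then b * Pc j (Suc k - j - 1) else 0)) = b * Tc k"
  proof -
    have "(\<Sum>j\<le>Suc k. (if 0 < Suc k - j then b * Pc j (Suc k - j - 1) else 0)) =
          (\<Sum>j\<le>k. (if 0 < Suc k - j then b * Pc j (Suc k - j - 1) else 0))"
      by (subst sum.atMost_Suc) simp
    also have "\<dots> = (\<Sum>j\<le>k. b * Pc j (k - j))"
      by (intro sum.cong) (auto simp: Suc_diff_le)
    finally show ?thesis by (simp add: Tc_def sum_distrib_left)
  qed
  finally show "(\<Sum>j\<le>Suc k. P j (Suc k - j)) = a * T0 k + b * Tc k" .
qed

lemma T0_0: "T0 0 = e0" and Tc_0: "Tc 0 = ec"
  and T0_Suc: "T0 (Suc k) = a00 * T0 k + a0c * Tc k"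
  and Tc_Suc: "Tc (Suc k) = ac0 * T0 k + acc * Tc k"
  using tot_rec_gen[OF rec0] tot_rec_gen[OF recc] by (simp_all add: T0_def Tc_def)

lemma T0_closed:
  assumes l: "l1 + l2 = a00 + acc" "l1 * l2 = a00 * acc - a0c * ac0"
    and i: "e0 = \<alpha> + \<beta>" "a00 * e0 + a0c * ec = \<alpha> * l1 + \<beta> * l2"
  shows "T0 k = \<alpha> * l1 ^ k + \<beta> * l2 ^ k"
proof -
  have rec2: "T0 (Suc (Suc k)) = (l1 + l2) * T0 (Suc k) - l1 * l2 * T0 k" for k
  proof -
    have e1: "a0c * Tc k = T0 (Suc k) - a00 * T0 k" using T0_Suc[of k] by simp
    have "T0 (Suc (Suc k)) = a00 * T0 (Suc k) + a0c * ac0 * T0 k + acc * (a0c * Tc k)"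
      unfolding T0_Suc[of "Suc k"] Tc_Suc by (simp add: algebra_simps)
    also have "\<dots> = (a00 + acc) * T0 (Suc k) - (a00 * acc - a0c * ac0) * T0 k"
      unfolding e1 by (simp add: algebra_simps)
    finally show ?thesis unfolding l .
  qed
  have "T0 k = \<alpha> * l1 ^ k + \<beta> * l2 ^ k \<and> T0 (Suc k) = \<alpha> * l1 ^ Suc k + \<beta> * l2 ^ Suc k"
  proof (induction k)
    case 0 then show ?case using i by (simp add: T0_0 T0_Suc Tc_0)
  next
    case (Suc k)
    then show ?case by (simp add: rec2 algebra_simps)
  qed
  then show ?thesis by simp
qed

end

lemma param_alg:
  fixes p q h g H :: real
  assumes "1 - H \<noteq> 0" "p * h = q" "p + q = 1" "q * g = p * H"
  shows "p * (1 - (1 - h) / (1 - H)) + q = (2*q - H)/(1-H)"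
   "p * ((1 - h) / (1 - H)) = (1 - 2*q) / (1 - H)"
   "p * h + q * ((1 - g) / (1 - H)) = (2*q - H) / (1 - H)"
   "q * (1 - (1 - g) / (1 - H)) = (1 - 2*q) * H / (1 - H)"
   "p * (1 - h) = 1 - 2 * q"
  using assms by (simp_all add: divide_simps) (algebra)+

lemma R_alg:
  fixes q H w :: real
  assumes "1 - H \<noteq> 0" "1 - 2*q \<noteq> 0" "q \<noteq> 0" "(1 - H) - (2*q - H) * w \<noteq> 0"
  shows "(2*q-H)/(1-H) + (1-2*q)/(1-H) * w * ((1-2*q)*H/(1-H)) / (1 - (2*q-H)/(1-H) * w)
     = 2*q * ((1 - (4*q^2 - H)/(2*q*(1-2*q)) * (w-1)) / (1 - (2*q-H)/(1-2*q)*(w-1)))"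
   "(2*q-H)/(1-H) + (1-2*q)*H/(1-H) * w * ((1-2*q)/(1-H)) / (1 - (2*q-H)/(1-H) * w)
     = 2*q * ((1 - (4*q^2 - H)/(2*q*(1-2*q)) * (w-1)) / (1 - (2*q-H)/(1-2*q)*(w-1)))"
   "0 + (1-2*q)/(1-H) * w * (1 - 2*q) / (1 - (2*q-H)/(1-H) * w) = (1-2*q) * (w / (1 - (2*q-H)/(1-2*q)*(w-1)))"
  using assms by (simp_all add: divide_simps) (algebra)+

lemma L_alg:
  fixes q H s :: real
  assumes "s * s = H" "0 < s" "s < 1" "1 - 2*q \<noteq> 0"
  shows "(2*q+s)/(1+s) + (2*q-s)/(1-s) = (2*q-H)/(1-H) + (2*q-H)/(1-H)"
    "(2*q+s)/(1+s) * ((2*q-s)/(1-s)) = (2*q-H)/(1-H) * ((2*q-H)/(1-H)) - (1-2*q)/(1-H) * ((1-2*q)*H/(1-H))"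
    "(2*q+s)/(1+s) * ((2*q-s)/(1-s)) = (2*q-H)/(1-H) * ((2*q-H)/(1-H)) - (1-2*q)*H/(1-H) * ((1-2*q)/(1-H))"
    "(2*q-H)/(1-H) * 0 + (1-2*q)/(1-H) * (1 - 2*q) = (1-2*q)/(2 * s) * ((2*q+s)/(1+s)) + (-(1-2*q)/(2 * s)) * ((2*q-s)/(1-s))"
    "(2*q-H)/(1-H) * (1 - 2*q) + (1-2*q)*H/(1-H) * 0 = (1-2*q)/2 * ((2*q+s)/(1+s)) + (1-2*q)/2 * ((2*q-s)/(1-s))"
    "(1-2*q)/(2 * s) / (1 - (2*q+s)/(1+s)) + (-(1-2*q)/(2 * s)) / (1 - (2*q-s)/(1-s)) = 1"
    "(1-2*q)/2 / (1 - (2*q+s)/(1+s)) + (1-2*q)/2 / (1 - (2*q-s)/(1-s)) = 1"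
proof -
  have "s * s < 1 * 1" using assms by (intro mult_strict_mono) auto
  then have h1: "1 - H \<noteq> 0" "1 + s \<noteq> 0" "1 - s \<noteq> 0" using assms by auto
  have h2: "1 + s - (2*q+s) \<noteq> 0" "1 - s - (2*q-s) \<noteq> 0" using assms by auto
  show "(2*q+s)/(1+s) + (2*q-s)/(1-s) = (2*q-H)/(1-H) + (2*q-H)/(1-H)"
    "(2*q+s)/(1+s) * ((2*q-s)/(1-s)) = (2*q-H)/(1-H) * ((2*q-H)/(1-H)) - (1-2*q)/(1-H) * ((1-2*q)*H/(1-H))"
    "(2*q+s)/(1+s) * ((2*q-s)/(1-s)) = (2*q-H)/(1-H) * ((2*q-H)/(1-H)) - (1-2*q)*H/(1-H) * ((1-2*q)/(1-H))"
    "(2*q-H)/(1-H) * 0 + (1-2*q)/(1-H) * (1 - 2*q) = (1-2*q)/(2 * s) * ((2*q+s)/(1+s)) + (-(1-2*q)/(2 * s)) * ((2*q-s)/(1-s))"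
    "(2*q-H)/(1-H) * (1 - 2*q) + (1-2*q)*H/(1-H) * 0 = (1-2*q)/2 * ((2*q+s)/(1+s)) + (1-2*q)/2 * ((2*q-s)/(1-s))"
    using assms h1 by (simp_all add: divide_simps assms(1)[symmetric]) (algebra)+
  show "(1-2*q)/(2 * s) / (1 - (2*q+s)/(1+s)) + (-(1-2*q)/(2 * s)) / (1 - (2*q-s)/(1-s)) = 1"
    "(1-2*q)/2 / (1 - (2*q+s)/(1+s)) + (1-2*q)/2 / (1 - (2*q-s)/(1-s)) = 1"
    using assms h1 h2 by (simp_all add: divide_simps assms(1)[symmetric]) (algebra)+
qed



context rw begin
context fixes z :: nat assumes z: "z > 0" begin

abbreviation "Hz \<equiv> h ^ z"
abbreviation "gz \<equiv> h ^ (z - 1)"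

lemma H_bounds: "0 < Hz" "Hz < 1" "Hz \<le> h"
proof -
  show "0 < Hz" using h_pos by simp
  show "Hz < 1" using h_pos h_lt1 z by (simp add: power_less_one_iff)
  show "Hz \<le> h" using power_decreasing[of 1 z h] h_pos h_lt1 z by simp
qed

lemma qg: "q * gz = p * Hz" using Hg[OF z] ph by (simp add: algebra_simps)
lemma p_eq: "p = 1 - q" using pq by simp

lemma H_lt_2q: "Hz < 2 * q"
proof -
  have "q * 1 < q * (2 * p)" using q_pos qp pq by (intro mult_strict_left_mono) auto
  then have "q / p < 2 * q" using p_pos by (simp add: divide_simps)
  then show ?thesis using H_bounds by (simp add: h_def)
qed

lemma H1: "1 - Hz \<noteq> 0" using H_bounds by simp

lemma pos_params:
  "rr (int z) 0 0 = (2*q - Hz) / (1 - Hz)"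
  "rr (int z) 0 (int z) = (1 - 2*q) / (1 - Hz)"
  "rr (int z) (int z) (int z) = (2*q - Hz) / (1 - Hz)"
  "rr (int z) (int z) 0 = (1 - 2*q) * Hz / (1 - Hz)"
  "ee (int z) 0 = 0"
  "ee (int z) (int z) = 1 - 2*q"
proof -
  note v = pos_vals[OF z] and a = param_alg[OF H1 ph pq qg]
  show "rr (int z) 0 0 = (2*q - Hz) / (1 - Hz)" by (subst v(1)) (rule a(1))
  show "rr (int z) 0 (int z) = (1 - 2*q) / (1 - Hz)" by (subst v(2)) (rule a(2))
  show "rr (int z) (int z) (int z) = (2*q - Hz) / (1 - Hz)" by (subst v(3)) (rule a(3))
  show "rr (int z) (int z) 0 = (1 - 2*q) * Hz / (1 - Hz)" by (subst v(4)) (rule a(4))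
  show "ee (int z) 0 = 0" by (rule v(5))
  show "ee (int z) (int z) = 1 - 2*q" by (subst v(6)) (rule a(5))
qed

lemma neg_params:
  "rr (- int z) 0 0 = (2*q - Hz) / (1 - Hz)"
  "rr (- int z) 0 (- int z) = (1 - 2*q) * Hz / (1 - Hz)"
  "rr (- int z) (- int z) (- int z) = (2*q - Hz) / (1 - Hz)"
  "rr (- int z) (- int z) 0 = (1 - 2*q) / (1 - Hz)"
  "ee (- int z) 0 = 1 - 2*q"
  "ee (- int z) (- int z) = 0"
proof -
  note v = neg_vals[OF z] and a = param_alg[OF H1 ph pq qg]
  show "rr (- int z) 0 0 = (2*q - Hz) / (1 - Hz)" by (subst v(1)) (rule a(3))
  show "rr (- int z) 0 (- int z) = (1 - 2*q) * Hz / (1 - Hz)" by (subst v(2)) (rule a(4))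
  show "rr (- int z) (- int z) (- int z) = (2*q - Hz) / (1 - Hz)" by (subst v(3)) (rule a(1))
  show "rr (- int z) (- int z) 0 = (1 - 2*q) / (1 - Hz)" by (subst v(4)) (rule a(2))
  show "ee (- int z) 0 = 1 - 2*q" by (subst v(5)) (rule a(5))
  show "ee (- int z) (- int z) = 0" by (rule v(6))
qed

end
end

context rw begin
context fixes z :: nat assumes z: "z > 0" begin

abbreviation "AA \<equiv> (2*q - h ^ z) / (1 - h ^ z)"
abbreviation "BB \<equiv> (1 - 2*q) / (1 - h ^ z)"
abbreviation "CC \<equiv> (1 - 2*q) * h ^ z / (1 - h ^ z)"

lemma AA_pos: "0 < AA" using H_bounds[OF z] H_lt_2q[OF z] by simp
lemma BB_pos: "0 < BB" using H_bounds[OF z] qp pq by simp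
lemma CC_pos: "0 < CC" using H_bounds[OF z] qp pq by simp
lemma q_half: "q < 1/2" using qp pq by simp

lemma Pr_Cnt_nn: "0 \<le> Pr (Cnt c y j m)" by (rule Pr_nonneg)

lemma gen_pos: "gen2 (\<lambda>j m. Pr (Cnt (int z) 0 j m)) (\<lambda>j m. Pr (Cnt (int z) (int z) j m))
   (ee (int z) 0) (ee (int z) (int z)) (rr (int z) 0 0) (rr (int z) 0 (int z)) (rr (int z) (int z) 0) (rr (int z) (int z) (int z))"
  by unfold_locales (use Cnt_rec[of "int z"] z in auto)

lemma gen_neg: "gen2 (\<lambda>j m. Pr (Cnt (- int z) 0 j m)) (\<lambda>j m. Pr (Cnt (- int z) (- int z) j m))
   (ee (- int z) 0) (ee (- int z) (- int z)) (rr (- int z) 0 0) (rr (- int z) 0 (- int z)) (rr (- int z) (- int z) 0) (rr (- int z) (- int z) (- int z))"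
  by unfold_locales (use Cnt_rec[of "- int z"] z in auto)

definition "phiw w = (1 - (4*q^2 - h^z)/(2*q*(1-2*q)) * (w-1)) / (1 - (2*q-h^z)/(1-2*q)*(w-1))"
definition "psiw w = w / (1 - (2*q-h^z)/(1-2*q)*(w-1))"

lemma exp_pos:
  assumes w: "0 < w" "AA * w < 1"
  shows "(\<lambda>m. w ^ m * Pr (Cnt (int z) 0 k m)) sums ((1 - 2*q) * (2*q) ^ k * phiw w ^ k * psiw w)"
proof -
  interpret G: gen2 "\<lambda>j m. Pr (Cnt (int z) 0 j m)" "\<lambda>j m. Pr (Cnt (int z) (int z) j m)"
   "ee (int z) 0" "ee (int z) (int z)" "rr (int z) 0 0" "rr (int z) 0 (int z)" "rr (int z) (int z) 0" "rr (int z) (int z) (int z)"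
    by (rule gen_pos)
  note pp = pos_params[OF z]
  have "(\<lambda>m. w ^ m * Pr (Cnt (int z) 0 k m)) sums
     ((ee (int z) 0 + rr (int z) 0 (int z) * w * ee (int z) (int z) / (1 - rr (int z) (int z) (int z) * w)) *
      (rr (int z) 0 0 + rr (int z) 0 (int z) * w * rr (int z) (int z) 0 / (1 - rr (int z) (int z) (int z) * w)) ^ k)"
    by (rule G.gen_sum) (use pp w CC_pos AA_pos q_half in \<open>auto intro: Pr_nonneg\<close>)
  also have "\<dots> = ((1 - 2*q) * psiw w) * (2*q * phiw w) ^ k"
  proof -
    have nz: "1 - h^z \<noteq> 0" "1 - 2*q \<noteq> 0" "q \<noteq> 0" "(1 - h^z) - (2*q - h^z) * w \<noteq> 0"
      using H_bounds[OF z] q_half q_pos w by (auto simp: field_simps)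
    show ?thesis unfolding pp phiw_def psiw_def using R_alg(1,3)[OF nz] by simp
  qed
  finally show ?thesis by (simp add: power_mult_distrib mult_ac)
qed

lemma exp_neg:
  assumes w: "0 < w" "AA * w < 1"
  shows "(\<lambda>m. w ^ m * Pr (Cnt (- int z) 0 k m)) sums ((1 - 2*q) * (2*q) ^ k * phiw w ^ k)"
proof -
  interpret G: gen2 "\<lambda>j m. Pr (Cnt (- int z) 0 j m)" "\<lambda>j m. Pr (Cnt (- int z) (- int z) j m)"
   "ee (- int z) 0" "ee (- int z) (- int z)" "rr (- int z) 0 0" "rr (- int z) 0 (- int z)" "rr (- int z) (- int z) 0" "rr (- int z) (- int z) (- int z)"
    by (rule gen_neg)
  note pp = neg_params[OF z]
  have "(\<lambda>m. w ^ m * Pr (Cnt (- int z) 0 k m)) sums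
     ((ee (- int z) 0 + rr (- int z) 0 (- int z) * w * ee (- int z) (- int z) / (1 - rr (- int z) (- int z) (- int z) * w)) *
      (rr (- int z) 0 0 + rr (- int z) 0 (- int z) * w * rr (- int z) (- int z) 0 / (1 - rr (- int z) (- int z) (- int z) * w)) ^ k)"
    by (rule G.gen_sum) (use pp w BB_pos AA_pos q_half in \<open>auto intro: Pr_nonneg\<close>)
  also have "\<dots> = (1 - 2*q) * (2*q * phiw w) ^ k"
  proof -
    have nz: "1 - h^z \<noteq> 0" "1 - 2*q \<noteq> 0" "q \<noteq> 0" "(1 - h^z) - (2*q - h^z) * w \<noteq> 0"
      using H_bounds[OF z] q_half q_pos w by (auto simp: field_simps)
    show ?thesis unfolding pp phiw_def using R_alg(2)[OF nz] by simp
  qed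
  finally show ?thesis by (simp add: power_mult_distrib mult_ac)
qed

definition "ss = h powr (real z / 2)"
definition "l1 = (2*q + ss) / (1 + ss)"
definition "l2 = (2*q - ss) / (1 - ss)"

lemma ss: "ss * ss = h ^ z" "0 < ss" "ss < 1"
proof -
  show "ss * ss = h ^ z" unfolding ss_def using h_pos by (simp add: powr_add[symmetric] powr_realpow)
  show "0 < ss" using h_pos by (simp add: ss_def)
  show "ss < 1"
  proof (rule ccontr)
    assume "\<not> ss < 1"
    then have "1 * 1 \<le> ss * ss" by (intro mult_mono) auto
    moreover have "h ^ z < 1" using h_pos h_lt1 z by (simp add: power_less_one_iff)
    moreover have "ss * ss = h ^ z" unfolding ss_def using h_pos by (simp add: powr_add[symmetric] powr_realpow)
    ultimately show False by simp
  qed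
qed

lemma Tot_pos: "Pr (Tot (int z) 0 k) = (1-2*q)/(2 * ss) * l1 ^ k + (-(1-2*q)/(2 * ss)) * l2 ^ k"
proof -
  interpret G: gen2 "\<lambda>j m. Pr (Cnt (int z) 0 j m)" "\<lambda>j m. Pr (Cnt (int z) (int z) j m)"
   "ee (int z) 0" "ee (int z) (int z)" "rr (int z) 0 0" "rr (int z) 0 (int z)" "rr (int z) (int z) 0" "rr (int z) (int z) (int z)"
    by (rule gen_pos)
  note pp = pos_params[OF z]
  have q2: "1 - 2*q \<noteq> 0" using q_half by simp
  note L = L_alg[OF ss q2]
  have "Pr (Tot (int z) 0 k) = G.T0 k" using z by (simp add: Tot_sum G.T0_def)
  also have "\<dots> = (1-2*q)/(2 * ss) * l1 ^ k + (-(1-2*q)/(2 * ss)) * l2 ^ k"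
  proof (rule G.T0_closed)
    show "ee (int z) 0 = (1 - 2 * q) / (2 * ss) + - (1 - 2 * q) / (2 * ss)" by (simp add: pp divide_simps)
  qed (use L in \<open>simp_all add: pp l1_def l2_def\<close>)
  finally show ?thesis .
qed

lemma Tot_neg: "Pr (Tot (- int z) 0 k) = (1-2*q)/2 * l1 ^ k + (1-2*q)/2 * l2 ^ k"
proof -
  interpret G: gen2 "\<lambda>j m. Pr (Cnt (- int z) 0 j m)" "\<lambda>j m. Pr (Cnt (- int z) (- int z) j m)"
   "ee (- int z) 0" "ee (- int z) (- int z)" "rr (- int z) 0 0" "rr (- int z) 0 (- int z)" "rr (- int z) (- int z) 0" "rr (- int z) (- int z) (- int z)"
    by (rule gen_neg)
  note pp = neg_params[OF z]
  have q2: "1 - 2*q \<noteq> 0" using q_half by simp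
  note L = L_alg[OF ss q2]
  have "Pr (Tot (- int z) 0 k) = G.T0 k" using z by (simp add: Tot_sum G.T0_def)
  also have "\<dots> = (1-2*q)/2 * l1 ^ k + (1-2*q)/2 * l2 ^ k"
    by (rule G.T0_closed) (use L in \<open>simp_all add: pp l1_def l2_def\<close>)
  finally show ?thesis .
qed

lemma l_bounds: "\<bar>l1\<bar> < 1" "\<bar>l2\<bar> < 1"
proof -
  have s: "0 < ss" "ss < 1" using ss by auto
  show "\<bar>l1\<bar> < 1" using s q_pos q_half by (simp add: l1_def divide_simps abs_if)
  have "ss * ss \<le> h" using ss H_bounds[OF z] by simp
  moreover have "4 * h < (1 + 2*q) * (1 + 2*q)"
  proof -
    have "4 * q < (1 - q) * ((1 + 2*q) * (1 + 2*q))"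
    proof -
      have "q * q < (1/2) * (1/2)" using q_pos q_half by (intro mult_strict_mono) auto
      then have "(q * q) * q < ((1/2) * (1/2)) * (1/2)" using q_pos q_half by (intro mult_strict_mono) auto
      then have "q * q * q < 1/8" by simp
      then have "q + 4 * (q * q * q) < 1" using q_half by simp
      then show ?thesis by (simp add: algebra_simps)
    qed
    moreover have "p = 1 - q" using pq by simp
    ultimately have "4 * q < p * ((1 + 2*q) * (1 + 2*q))" by simp
    then have "4 * q / p < (1 + 2*q) * (1 + 2*q)" using p_pos by (simp add: pos_divide_less_eq mult_ac)
    moreover have "h = q / p" by (simp add: h_def)
    ultimately show ?thesis by simp
  qed
  ultimately have "(2 * ss) * (2 * ss) < (1 + 2*q) * (1 + 2*q)" by simp
  then have "2 * ss < 1 + 2*q"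
  proof -
    assume a: "(2 * ss) * (2 * ss) < (1 + 2*q) * (1 + 2*q)"
    show ?thesis
    proof (rule ccontr)
      assume "\<not> 2 * ss < 1 + 2*q"
      then have "(1 + 2*q) * (1 + 2*q) \<le> (2 * ss) * (2 * ss)" using q_pos by (intro mult_mono) auto
      then show False using a by simp
    qed
  qed
  then show "\<bar>l2\<bar> < 1" using s q_pos q_half by (simp add: l2_def divide_simps abs_if)
qed

lemma fin_as:
  assumes "c = int z \<or> c = - int z"
  shows "Pr (\<lambda>s. finite (Vs c 0 s)) = 1"
proof -
  have c: "c \<noteq> 0" using assms z by auto
  define A where "A k = {s. Tot c 0 k s}" for k
  have As: "range A \<subseteq> sets S" unfolding A_def by (auto intro: sets_pred)
  have dA: "disjoint_family A" unfolding A_def disjoint_family_on_def Tot_def by auto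
  have U: "(\<Union>k. A k) = {s. finite (Vs c 0 s)}" unfolding A_def Tot_def by auto
  have "(\<lambda>k. measure S (A k)) sums measure S (\<Union>k. A k)" by (rule SS.finite_measure_UNION[OF As dA])
  moreover have "(\<lambda>k. measure S (A k)) sums 1"
  proof -
    have g1: "(\<lambda>k. l1 ^ k) sums (1 / (1 - l1))" "(\<lambda>k. l2 ^ k) sums (1 / (1 - l2))"
      using l_bounds by (auto intro: geometric_sums)
    have q2: "1 - 2*q \<noteq> 0" using q_half by simp
    note L = L_alg[OF ss q2]
    show ?thesis
    proof (cases "c = int z")
      case True
      have "(\<lambda>k. (1-2*q)/(2 * ss) * l1 ^ k + (-(1-2*q)/(2 * ss)) * l2 ^ k) sums
            ((1-2*q)/(2 * ss) * (1 / (1 - l1)) + (-(1-2*q)/(2 * ss)) * (1 / (1 - l2)))"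
        by (intro sums_add sums_mult g1)
      moreover have "(\<lambda>k. measure S (A k)) = (\<lambda>k. (1-2*q)/(2 * ss) * l1 ^ k + (-(1-2*q)/(2 * ss)) * l2 ^ k)"
        unfolding A_def using True by (simp add: Pr_def[symmetric] Tot_pos)
      ultimately show ?thesis using L(6) by (simp add: l1_def l2_def)
    next
      case False
      then have cn: "c = - int z" using assms by simp
      have "(\<lambda>k. (1-2*q)/2 * l1 ^ k + (1-2*q)/2 * l2 ^ k) sums
            ((1-2*q)/2 * (1 / (1 - l1)) + (1-2*q)/2 * (1 / (1 - l2)))"
        by (intro sums_add sums_mult g1)
      moreover have "(\<lambda>k. measure S (A k)) = (\<lambda>k. (1-2*q)/2 * l1 ^ k + (1-2*q)/2 * l2 ^ k)"
        unfolding A_def using cn by (simp add: Pr_def[symmetric] Tot_neg)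
      ultimately show ?thesis using L(7) by (simp add: l1_def l2_def)
    qed
  qed
  ultimately show ?thesis using U sums_unique2 by (simp add: Pr_def) blast
qed

end
end

definition Wr :: "int stream \<Rightarrow> nat \<Rightarrow> int" where "Wr s n = (\<Sum>i<n. s !! i)"
definition Lr :: "int stream \<Rightarrow> int \<Rightarrow> nat" where "Lr s x = card {k. 1 \<le> k \<and> Wr s k = x}"

lemma Wr_eq_meas[measurable]: "Measurable.pred (stream_space (count_space UNIV)) (\<lambda>s. Wr s m = d)"
  using finite_dep_meas[where n=m and Q="\<lambda>l. (\<Sum>i<m. l ! i) = d"] by (simp add: Wr_def)

lemma Lr_meas: "(\<lambda>s. Lr s x) \<in> measurable (stream_space (count_space UNIV)) (count_space UNIV)"
proof (subst measurable_count_space_eq2_countable, safe)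
  fix j :: nat
  have "(\<lambda>s. Lr s x) -` {j} \<inter> space (stream_space (count_space UNIV)) =
     {s \<in> space (stream_space (count_space UNIV)).
        (finite {k. 1 \<le> k \<and> Wr s k = x} \<and> card {k. 1 \<le> k \<and> Wr s k = x} = j) \<or>
        (j = 0 \<and> \<not> finite {k. 1 \<le> k \<and> Wr s k = x})}"
    by (auto simp: Lr_def dest: card_ge_0_finite)
  also have "\<dots> \<in> sets (stream_space (count_space UNIV))"
    by (rule predE, intro pred_intros_logic card_meas finite_meas) measurable
  finally show "(\<lambda>s. Lr s x) -` {j} \<inter> space (stream_space (count_space UNIV)) \<in> sets (stream_space (count_space UNIV))" .
qed auto

lemma Wr_W: "(\<forall>i. s !! i = 1 \<or> s !! i = -1) \<Longrightarrow> Wr s n = W s n"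
  unfolding Wr_def W_def by (intro sum.cong) (auto simp: stp_def)

lemma Lr_Zs: "(\<forall>i. s !! i = 1 \<or> s !! i = -1) \<Longrightarrow> Lr s x = card (Zs x 0 s)"
  unfolding Lr_def Zs_def using Wr_W[of s] by simp

definition Zst :: "(nat \<Rightarrow> 'a \<Rightarrow> int) \<Rightarrow> 'a \<Rightarrow> int stream" where
  "Zst X \<omega> = to_stream (\<lambda>n. X (Suc n) \<omega>)"

lemma walk_Wr: "walk X n \<omega> = Wr (Zst X \<omega>) n"
  unfolding walk_def Wr_def Zst_def to_stream_def
  by (simp add: sum.atLeast1_atMost_eq)

lemma xi_Lr: "xi X x \<omega> = Lr (Zst X \<omega>) x"
  unfolding xi_def Lr_def walk_Wr ..

locale setting =
  fixes M :: "'a measure" and X :: "nat \<Rightarrow> 'a \<Rightarrow> int" and p q :: real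
  assumes M: "prob_space M"
    and q0: "0 < q" and qp: "q < p" and p1: "p < 1" and pq: "p + q = 1"
    and ind: "prob_space.indep_vars M (\<lambda>_. count_space UNIV) X {1..}"
    and X1: "\<And>i. i \<ge> 1 \<Longrightarrow> measure M {\<omega>\<in>space M. X i \<omega> = 1} = p"
    and Xm1: "\<And>i. i \<ge> 1 \<Longrightarrow> measure M {\<omega>\<in>space M. X i \<omega> = -1} = q"
begin

interpretation M: prob_space M by (rule M)

lemma rv: "i \<ge> 1 \<Longrightarrow> X i \<in> measurable M (count_space UNIV)"
  using ind unfolding M.indep_vars_def by auto

lemma X_other: assumes "i \<ge> 1" "a \<noteq> 1" "a \<noteq> -1" shows "measure M {\<omega>\<in>space M. X i \<omega> = a} = 0"
proof -
  have m: "{\<omega>\<in>space M. X i \<omega> = b} \<in> sets M" for b using rv[OF assms(1)] by measurable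
  define A where "A = {\<omega>\<in>space M. X i \<omega> = a}"
  define B where "B = {\<omega>\<in>space M. X i \<omega> = 1}"
  define C where "C = {\<omega>\<in>space M. X i \<omega> = -1}"
  have dj: "B \<inter> C = {}" by (auto simp: B_def C_def)
  have BC: "measure M (B \<union> C) = 1"
    using M.finite_measure_Union[of B C] dj m X1[OF assms(1)] Xm1[OF assms(1)] pq by (simp add: B_def C_def)
  have "measure M (A \<union> (B \<union> C)) = measure M A + measure M (B \<union> C)"
    using assms m by (intro M.finite_measure_Union) (auto simp: A_def B_def C_def)
  moreover have "measure M (A \<union> (B \<union> C)) \<le> 1" by (rule M.prob_le_1)
  ultimately have "measure M A \<le> 0" using BC by simp
  then show ?thesis unfolding A_def using measure_nonneg[of M] by (meson antisym)
qed

definition "N = distr M (count_space UNIV) (X 1)"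

lemma distr_Xi: "i \<ge> 1 \<Longrightarrow> distr M (count_space UNIV) (X i) = N"
proof -
  assume i: "i \<ge> 1"
  show ?thesis unfolding N_def
  proof (rule measure_eqI_countable[where A=UNIV])
    fix a :: int assume "a \<in> (UNIV :: int set)"
    have "emeasure (distr M (count_space UNIV) (X j)) {a} = measure M {\<omega>\<in>space M. X j \<omega> = a}" if "j \<ge> 1" for j
      using rv[OF that] by (subst emeasure_distr) (auto simp: M.emeasure_eq_measure vimage_def Int_def conj_commute)
    then show "emeasure (distr M (count_space UNIV) (X i)) {a} = emeasure (distr M (count_space UNIV) (X 1)) {a}"
      using i X1 Xm1 X_other by (cases "a = 1 \<or> a = -1") auto
  qed auto
qed

lemma N_rw: "rw N p q"
proof -
  have a1: "prob_space N" unfolding N_def using rv[of 1] by (intro M.prob_space_distr) auto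
  have a2: "sets N = sets (count_space UNIV)" by (simp add: N_def)
  have e: "emeasure N A = measure M {\<omega>\<in>space M. X 1 \<omega> \<in> A}" for A
    unfolding N_def using rv[of 1] by (subst emeasure_distr) (auto simp: M.emeasure_eq_measure vimage_def Int_def conj_commute)
  have a3: "emeasure N {1} = ennreal p" using e[of "{1}"] X1[of 1] by simp
  have "measure M {\<omega>\<in>space M. X 1 \<omega> \<in> UNIV - {1}} = measure M (space M - {\<omega>\<in>space M. X 1 \<omega> = 1})"
    by (intro arg_cong[where f="measure M"]) auto
  also have "\<dots> = 1 - p"
  proof -
    have "{\<omega>\<in>space M. X 1 \<omega> = 1} \<in> sets M" using rv[of 1] by measurable
    then show ?thesis using X1[of 1] by (subst M.prob_compl) auto
  qed
  also have "1 - p = q" using pq by simp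
  finally have a4: "emeasure N (UNIV - {1}) = ennreal q" using e[of "UNIV - {1}"] by simp
  show ?thesis unfolding rw_def using a1 a2 a3 a4 q0 qp pq by blast
qed

sublocale R: rw N p q by (rule N_rw)

lemma measN': "f \<in> measurable M (count_space UNIV) \<Longrightarrow> f \<in> measurable M N"
  using measurable_cong_sets[OF refl R.sets_N] by blast

lemma law: "distr M R.S (Zst X) = R.S" and Zm: "Zst X \<in> measurable M R.S"
proof -
  define T where "T \<omega> = (\<lambda>i\<in>{1::nat..}. X i \<omega>)" for \<omega>
  define r :: "(nat \<Rightarrow> int) \<Rightarrow> nat \<Rightarrow> int" where "r f = (\<lambda>n\<in>UNIV. f (Suc n))" for f
  have Tm: "T \<in> measurable M (PiM {1..} (\<lambda>_. N))"
    unfolding T_def by (intro measurable_restrict measN' rv) auto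
  have rm: "r \<in> measurable (PiM {1..} (\<lambda>_. N)) (PiM UNIV (\<lambda>_. N))"
    unfolding r_def by (intro measurable_restrict measurable_component_singleton) auto
  have tm: "to_stream \<in> measurable (PiM UNIV (\<lambda>_. N)) R.S" by (rule measurable_to_stream)
  have D1: "distr M (PiM {1..} (\<lambda>_. N)) T = PiM {1..} (\<lambda>_. N)"
  proof -
    have "distr M (PiM {1..} (\<lambda>_. N)) T = distr M (PiM {1..} (\<lambda>_. count_space UNIV)) T"
      by (intro distr_cong sets_PiM_cong) (auto simp: R.sets_N)
    also have "\<dots> = PiM {1..} (\<lambda>i. distr M (count_space UNIV) (X i))"
      unfolding T_def by (rule M.indep_vars_iff_distr_eq_PiM'[THEN iffD1, OF _ rv ind]) auto
    also have "\<dots> = PiM {1..} (\<lambda>_. N)"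
      by (intro PiM_cong distr_Xi) auto
    finally show ?thesis .
  qed
  have D2: "distr (PiM {1..} (\<lambda>_. N)) (PiM UNIV (\<lambda>_. N)) r = PiM UNIV (\<lambda>_. N)"
    unfolding r_def using distr_PiM_reindex[of "{1..}" "\<lambda>_. N" Suc UNIV] R.N_prob by simp
  have D3: "distr (PiM UNIV (\<lambda>_. N)) R.S to_stream = R.S"
    by (rule stream_space_eq_distr[symmetric])
  have Zeq: "Zst X \<omega> = (to_stream \<circ> (r \<circ> T)) \<omega>" for \<omega>
    unfolding Zst_def r_def T_def by (simp add: restrict_def)
  have Zeq': "Zst X = to_stream \<circ> (r \<circ> T)" using Zeq by (rule ext)
  show "Zst X \<in> measurable M R.S" unfolding Zeq' using tm rm Tm by (intro measurable_comp)
  have "distr M R.S (Zst X) = distr (distr (distr M (PiM {1..} (\<lambda>_. N)) T) (PiM UNIV (\<lambda>_. N)) r) R.S to_stream"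
    unfolding Zeq' using Tm rm tm by (simp add: distr_distr measurable_comp comp_assoc)
  also have "\<dots> = R.S" unfolding D1 D2 D3 ..
  finally show "distr M R.S (Zst X) = R.S" .
qed

lemma transfer_measure: "A \<in> sets R.S \<Longrightarrow> measure M (Zst X -` A \<inter> space M) = measure R.S A"
  using measure_distr[OF Zm, of A] law by simp

lemma transfer_integral: "G \<in> borel_measurable R.S \<Longrightarrow> integral\<^sup>L M (\<lambda>\<omega>. G (Zst X \<omega>)) = integral\<^sup>L R.S (G :: _ \<Rightarrow> real)"
  using integral_distr[OF Zm, of G] law by simp

lemma AE_pm1: "AE s in R.S. \<forall>i. s !! i = 1 \<or> s !! i = -1"
proof -
  have "emeasure N {-1} = ennreal q"
    unfolding N_def using rv[of 1] Xm1[of 1]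
    by (subst emeasure_distr) (auto simp: M.emeasure_eq_measure vimage_def Int_def conj_commute)
  have "AE x in N. x = 1 \<or> x = -1"
  proof (rule AE_I')
    have "emeasure N (UNIV - {1} - {-1}) = emeasure N (UNIV - {1}) - emeasure N {-1}"
      using R.sets_N by (subst emeasure_Diff) auto
    also have "\<dots> = 0" using R.Nq \<open>emeasure N {-1} = ennreal q\<close> by simp
    finally show "UNIV - {1} - {-1} \<in> null_sets N" using R.sets_N by (auto simp: null_sets_def)
  qed (auto simp: R.space_N)
  then have "AE s in R.S. stream_all (\<lambda>x. x = 1 \<or> x = -1) s"
    by (intro R.N.AE_stream_all) (auto simp: R.measN)
  then show ?thesis unfolding stream_all_def by (rule eventually_mono) (auto simp: snth_sset)
qed

lemma Lr_set: "{s. Lr s x = j} \<in> sets R.S"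
proof -
  have "(\<lambda>s. Lr s x) -` {j} \<inter> space R.S \<in> sets R.S"
    by (rule measurable_sets[OF R.measS[OF Lr_meas]]) simp
  then show ?thesis by (simp add: vimage_def)
qed

lemma Lr_measS: "(\<lambda>s. Lr s x) \<in> measurable R.S (count_space UNIV)"
  by (rule R.measS[OF Lr_meas])

context fixes z :: nat and c :: int assumes z: "z > 0" and c: "c = int z \<or> c = - int z"
begin

lemma c0: "c \<noteq> 0" using z c by auto

lemma AE_good: "AE s in R.S. (\<forall>i. s !! i = 1 \<or> s !! i = -1) \<and> finite (Vs c 0 s)"
proof -
  have "AE s in R.S. s \<in> {s. finite (Vs c 0 s)}"
    by (rule R.SS.AE_prob_1) (use R.fin_as[OF z c] in \<open>simp add: R.Pr_def\<close>)
  then show ?thesis using AE_pm1 by eventually_elim auto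
qed

lemma Xi_eq: "Xi X {0, c} \<omega> = Lr (Zst X \<omega>) 0 + Lr (Zst X \<omega>) c"
  using c0 by (simp add: Xi_def xi_Lr)

lemma Xi_result: "measure M {\<omega>\<in>space M. Xi X {0, c} \<omega> = k} = R.Pr (Tot c 0 k)"
proof -
  define E where "E = {s. Lr s 0 + Lr s c = k}"
  have E_eq: "E = (\<Union>j\<in>{..k}. {s. Lr s 0 = j} \<inter> {s. Lr s c = k - j})" unfolding E_def by auto
  have Es: "E \<in> sets R.S" unfolding E_eq using Lr_set by auto
  have "{\<omega>\<in>space M. Xi X {0, c} \<omega> = k} = Zst X -` E \<inter> space M"
    unfolding E_def Xi_eq by auto
  then have "measure M {\<omega>\<in>space M. Xi X {0, c} \<omega> = k} = measure R.S E"
    using transfer_measure[OF Es] by simp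
  also have "\<dots> = measure R.S {s. Tot c 0 k s}"
  proof (rule measure_eq_AE)
    show "AE x in R.S. (x \<in> E) = (x \<in> {s. Tot c 0 k s})"
      using AE_good
    proof eventually_elim
      case (elim s)
      then have l: "Lr s 0 = card (Zs 0 0 s)" "Lr s c = card (Zs c 0 s)" using Lr_Zs by auto
      have f: "finite (Zs 0 0 s)" "finite (Zs c 0 s)" using elim by (auto simp: Vs_Zs)
      have dj: "Zs 0 0 s \<inter> Zs c 0 s = {}" using c0 by (auto simp: Zs_def)
      show ?case unfolding E_def Tot_def using elim l card_Un_disjoint[OF f dj] by (simp add: Vs_Zs)
    qed
  qed (use Es in \<open>auto intro: R.sets_pred\<close>)
  finally show ?thesis by (simp add: R.Pr_def)
qed

lemma exp_result:
  fixes v :: real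
  assumes sm: "(\<lambda>m. exp v ^ m * R.Pr (Cnt c 0 k m)) sums L"
  shows "prob_space.expectation M (\<lambda>\<omega>. exp (v * real (xi X c \<omega>)) * indicator {\<omega>. xi X 0 \<omega> = k} \<omega>) = L"
proof -
  define G where "G s = exp (v * real (Lr s c)) * indicator {s. Lr s 0 = k} s" for s
  have Gm: "G \<in> borel_measurable R.S"
  proof -
    have m1: "(\<lambda>n::nat. exp (v * real n)) \<in> borel_measurable (count_space UNIV)" by simp
    have m2: "(\<lambda>s. exp (v * real (Lr s c))) \<in> borel_measurable R.S"
      by (rule measurable_compose[OF Lr_measS m1])
    have m3: "indicator {s. Lr s 0 = k} \<in> borel_measurable R.S"
      by (rule borel_measurable_indicator[OF Lr_set])
    have "(\<lambda>s. exp (v * real (Lr s c)) * indicator {s. Lr s 0 = k} s) \<in> borel_measurable R.S"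
      by (rule borel_measurable_times[OF m2 m3])
    then show ?thesis unfolding G_def .
  qed
  have "prob_space.expectation M (\<lambda>\<omega>. exp (v * real (xi X c \<omega>)) * indicator {\<omega>. xi X 0 \<omega> = k} \<omega>)
      = integral\<^sup>L M (\<lambda>\<omega>. G (Zst X \<omega>))"
    unfolding G_def xi_Lr by (simp add: indicator_def)
  also have "\<dots> = integral\<^sup>L R.S G" by (rule transfer_integral[OF Gm])
  also have "\<dots> = enn2real (\<integral>\<^sup>+s. ennreal (G s) \<partial>R.S)"
    by (rule integral_eq_nn_integral[OF Gm]) (auto simp: G_def)
  also have "(\<integral>\<^sup>+s. ennreal (G s) \<partial>R.S) = (\<integral>\<^sup>+s. (\<Sum>m. ennreal (exp v ^ m) * indicator {s. Cnt c 0 k m s} s) \<partial>R.S)"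
  proof (rule nn_integral_cong_AE)
    show "AE s in R.S. ennreal (G s) = (\<Sum>m. ennreal (exp v ^ m) * indicator {s. Cnt c 0 k m s} s)"
      using AE_good
    proof eventually_elim
      case (elim s)
      then have l: "Lr s 0 = card (Zs 0 0 s)" "Lr s c = card (Zs c 0 s)" using Lr_Zs by auto
      have f: "finite (Zs 0 0 s)" "finite (Zs c 0 s)" using elim by (auto simp: Vs_Zs)
      have cnt: "Cnt c 0 k m s \<longleftrightarrow> Lr s 0 = k \<and> Lr s c = m" for m using f l by (auto simp: Cnt_def)
      show ?case
      proof (cases "Lr s 0 = k")
        case True
        have e1: "(\<lambda>m. ennreal (exp v ^ m) * indicator {s. Cnt c 0 k m s} s) = (\<lambda>m. if m = Lr s c then ennreal (exp v ^ Lr s c) else 0)"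
          using True by (auto simp: cnt fun_eq_iff)
        have e2: "(\<lambda>m. if m = Lr s c then ennreal (exp v ^ Lr s c) else 0) sums ennreal (exp v ^ Lr s c)"
          using sums_single[of "Lr s c" "\<lambda>_. ennreal (exp v ^ Lr s c)"] by simp
        have "(\<Sum>m. ennreal (exp v ^ m) * indicator {s. Cnt c 0 k m s} s) = ennreal (exp v ^ Lr s c)"
          unfolding e1 by (rule sums_unique[OF e2, symmetric])
        moreover have "G s = exp v ^ Lr s c"
          using True exp_of_nat_mult[of "Lr s c" v] by (simp add: G_def mult.commute)
        ultimately show ?thesis by simp
      next
        case False
        then show ?thesis by (simp add: G_def cnt)
      qed
    qed
  qed
  also have "\<dots> = (\<Sum>m. \<integral>\<^sup>+s. ennreal (exp v ^ m) * indicator {s. Cnt c 0 k m s} s \<partial>R.S)"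
  proof (rule nn_integral_suminf)
    fix m
    have Cs: "{s. Cnt c 0 k m s} \<in> sets R.S" by (rule R.sets_pred) measurable
    show "(\<lambda>s. ennreal (exp v ^ m) * indicator {s. Cnt c 0 k m s} s) \<in> borel_measurable R.S"
      using Cs by measurable
  qed
  also have "\<dots> = (\<Sum>m. ennreal (exp v ^ m * R.Pr (Cnt c 0 k m)))"
  proof (rule suminf_cong)
    fix m
    have Cs: "{s. Cnt c 0 k m s} \<in> sets R.S" by (rule R.sets_pred) measurable
    have "(\<integral>\<^sup>+s. ennreal (exp v ^ m) * indicator {s. Cnt c 0 k m s} s \<partial>R.S) = ennreal (exp v ^ m) * emeasure R.S {s. Cnt c 0 k m s}"
      by (rule nn_integral_cmult_indicator[OF Cs])
    also have "\<dots> = ennreal (exp v ^ m) * ennreal (R.Pr (Cnt c 0 k m))"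
      by (simp add: R.Pr_def R.SS.emeasure_eq_measure)
    also have "\<dots> = ennreal (exp v ^ m * R.Pr (Cnt c 0 k m))"
      by (rule ennreal_mult[symmetric]) (auto simp: R.Pr_nonneg)
    finally show "(\<integral>\<^sup>+s. ennreal (exp v ^ m) * indicator {s. Cnt c 0 k m s} s \<partial>R.S) = ennreal (exp v ^ m * R.Pr (Cnt c 0 k m))" .
  qed
  also have "\<dots> = ennreal L"
  proof -
    have u: "(\<Sum>m. exp v ^ m * R.Pr (Cnt c 0 k m)) = L" using sums_unique[OF sm] by simp
    have "(\<Sum>m. ennreal (exp v ^ m * R.Pr (Cnt c 0 k m))) = ennreal (\<Sum>m. exp v ^ m * R.Pr (Cnt c 0 k m))"
      by (rule suminf_ennreal2[OF _ sums_summable[OF sm]]) (simp add: R.Pr_nonneg)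
    then show ?thesis unfolding u .
  qed
  finally have res: "prob_space.expectation M (\<lambda>\<omega>. exp (v * real (xi X c \<omega>)) * indicator {\<omega>. xi X 0 \<omega> = k} \<omega>) = enn2real (ennreal L)" .
  have "0 \<le> (\<Sum>m. exp v ^ m * R.Pr (Cnt c 0 k m))"
    by (rule suminf_nonneg[OF sums_summable[OF sm]]) (simp add: R.Pr_nonneg)
  then have "0 \<le> L" using sums_unique[OF sm] by simp
  then show ?thesis using res by simp
qed

end

lemma main:
  assumes z: "z > 0"
  shows "(\<forall>(k::nat) (v::real). v < - ln (1 - (1 - 2*q) / (1 - (q/p)^z)) \<longrightarrow>
            prob_space.expectation M
              (\<lambda>\<omega>. exp (v * real (xi X (int z) \<omega>)) * indicator {\<omega>. xi X 0 \<omega> = k} \<omega>)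
            = (1 - 2*q) * (2*q)^k * (phi_fun q z v)^k * psi_fun q z v)
       \<and> (\<forall>(k::nat) (v::real). v < - ln (1 - (1 - 2*q) / (1 - (q/p)^z)) \<longrightarrow>
            prob_space.expectation M
              (\<lambda>\<omega>. exp (v * real (xi X (- int z) \<omega>)) * indicator {\<omega>. xi X 0 \<omega> = k} \<omega>)
            = (1 - 2*q) * (2*q)^k * (phi_fun q z v)^k)
       \<and> (\<forall>k::nat. k \<ge> 1 \<longrightarrow>
            measure M {\<omega>\<in>space M. Xi X {0, int z} \<omega> = k}
            = (1 - 2*q) / (2 * (q/p) powr (z/2)) *
              (((2*q + (q/p) powr (z/2)) / (1 + (q/p) powr (z/2)))^k
             - ((2*q - (q/p) powr (z/2)) / (1 - (q/p) powr (z/2)))^k))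
       \<and> (\<forall>k::nat.
            measure M {\<omega>\<in>space M. Xi X {0, - int z} \<omega> = k}
            = (1 - 2*q) / 2 *
              (((2*q + (q/p) powr (z/2)) / (1 + (q/p) powr (z/2)))^k
             + ((2*q - (q/p) powr (z/2)) / (1 - (q/p) powr (z/2)))^k))"
proof -
  have hq: "R.h = q / p" by (simp add: R.h_def)
  have hq': "q / (1 - q) = R.h" using pq by (simp add: hq)
  have phi: "phi_fun q z v = R.phiw z (exp v)" for v
    using z by (simp add: phi_fun_def R.phiw_def Let_def hq')
  have psi: "psi_fun q z v = R.psiw z (exp v)" for v
    using z by (simp add: psi_fun_def R.psiw_def Let_def hq')
  have cond: "R.AA z * exp v < 1" if "v < - ln (1 - (1 - 2*q) / (1 - (q/p)^z))" for v
  proof -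
    have H: "0 < R.h ^ z" "R.h ^ z < 1" using R.H_bounds[OF z] by auto
    have eq: "1 - (1 - 2*q) / (1 - (q/p)^z) = R.AA z"
    proof -
      have "(q/p)^z = R.h ^ z" by (simp add: hq)
      moreover have "1 - (1 - 2*q) / (1 - x) = (2*q - x) / (1 - x)" if "x < 1" for x :: real
        using that by (simp add: divide_simps)
      ultimately show ?thesis using H by simp
    qed
    have A0: "0 < R.AA z" by (rule R.AA_pos[OF z])
    have "v < - ln (R.AA z)" using that eq by simp
    then have "ln (R.AA z) < - v" by simp
    then have "exp (ln (R.AA z)) < exp (- v)" by (rule exp_less_mono)
    then have "R.AA z < exp (- v)" using A0 by simp
    then have "R.AA z * exp v < exp (- v) * exp v" by (rule mult_strict_right_mono) simp
    then show ?thesis by (simp add: exp_minus)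
  qed
  have ss: "(q/p) powr (real z / 2) = R.ss z" using z by (simp add: R.ss_def hq)
  show ?thesis
  proof (intro conjI allI impI)
    fix k :: nat and v :: real
    assume v: "v < - ln (1 - (1 - 2*q) / (1 - (q/p)^z))"
    show "prob_space.expectation M (\<lambda>\<omega>. exp (v * real (xi X (int z) \<omega>)) * indicator {\<omega>. xi X 0 \<omega> = k} \<omega>)
            = (1 - 2*q) * (2*q)^k * (phi_fun q z v)^k * psi_fun q z v"
      unfolding phi psi
      by (rule exp_result[OF z _ R.exp_pos[OF z exp_gt_zero cond[OF v]]]) simp
  next
    fix k :: nat and v :: real
    assume v: "v < - ln (1 - (1 - 2*q) / (1 - (q/p)^z))"
    show "prob_space.expectation M (\<lambda>\<omega>. exp (v * real (xi X (- int z) \<omega>)) * indicator {\<omega>. xi X 0 \<omega> = k} \<omega>)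
            = (1 - 2*q) * (2*q)^k * (phi_fun q z v)^k"
      unfolding phi
      by (rule exp_result[OF z _ R.exp_neg[OF z exp_gt_zero cond[OF v]]]) simp
  next
    fix k :: nat
    show "measure M {\<omega>\<in>space M. Xi X {0, int z} \<omega> = k}
            = (1 - 2*q) / (2 * (q/p) powr (z/2)) *
              (((2*q + (q/p) powr (z/2)) / (1 + (q/p) powr (z/2)))^k
             - ((2*q - (q/p) powr (z/2)) / (1 - (q/p) powr (z/2)))^k)"
    proof -
      have "measure M {\<omega>\<in>space M. Xi X {0, int z} \<omega> = k} = R.Pr (Tot (int z) 0 k)"
        by (rule Xi_result[OF z]) simp
      also have "\<dots> = (1-2*q)/(2 * R.ss z) * R.l1 z ^ k + (-(1-2*q)/(2 * R.ss z)) * R.l2 z ^ k"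
        by (rule R.Tot_pos[OF z])
      also have "\<dots> = (1-2*q)/(2 * R.ss z) * (R.l1 z ^ k - R.l2 z ^ k)"
        by (simp only: minus_divide_left[symmetric] mult_minus_left mult_minus_right diff_conv_add_uminus distrib_left)
      also have "\<dots> = (1 - 2*q) / (2 * (q/p) powr (z/2)) *
              (((2*q + (q/p) powr (z/2)) / (1 + (q/p) powr (z/2)))^k
             - ((2*q - (q/p) powr (z/2)) / (1 - (q/p) powr (z/2)))^k)"
        using z by (simp add: R.l1_def R.l2_def ss)
      finally show ?thesis .
    qed
  next
    fix k :: nat
    show "measure M {\<omega>\<in>space M. Xi X {0, - int z} \<omega> = k}
            = (1 - 2*q) / 2 *
              (((2*q + (q/p) powr (z/2)) / (1 + (q/p) powr (z/2)))^k
             + ((2*q - (q/p) powr (z/2)) / (1 - (q/p) powr (z/2)))^k)"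
    proof -
      have "measure M {\<omega>\<in>space M. Xi X {0, - int z} \<omega> = k} = R.Pr (Tot (- int z) 0 k)"
        by (rule Xi_result[OF z]) simp
      also have "\<dots> = (1-2*q)/2 * R.l1 z ^ k + (1-2*q)/2 * R.l2 z ^ k"
        by (rule R.Tot_neg[OF z])
      also have "\<dots> = (1-2*q)/2 * (R.l1 z ^ k + R.l2 z ^ k)"
        by (simp add: distrib_left)
      also have "\<dots> = (1 - 2*q) / 2 *
              (((2*q + (q/p) powr (z/2)) / (1 + (q/p) powr (z/2)))^k
             + ((2*q - (q/p) powr (z/2)) / (1 - (q/p) powr (z/2)))^k)"
        using z by (simp add: R.l1_def R.l2_def ss)
      finally show ?thesis .
    qed
  qed
qed

end

theorem proposition4p1:
  fixes M :: "'a measure" and X :: "nat \<Rightarrow> 'a \<Rightarrow> int" and p q :: real and z :: nat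
  assumes "prob_space M"
    and "0 < q" "q < p" "p < 1" "p + q = 1"
    and "prob_space.indep_vars M (\<lambda>_. count_space UNIV) X {1..}"
    and "\<And>i. i \<ge> 1 \<Longrightarrow> measure M {\<omega>\<in>space M. X i \<omega> = 1} = p"
    and "\<And>i. i \<ge> 1 \<Longrightarrow> measure M {\<omega>\<in>space M. X i \<omega> = -1} = q"
    and "z > 0"
  shows "(\<forall>(k::nat) (v::real). v < - ln (1 - (1 - 2*q) / (1 - (q/p)^z)) \<longrightarrow>
            prob_space.expectation M
              (\<lambda>\<omega>. exp (v * real (xi X (int z) \<omega>)) * indicator {\<omega>. xi X 0 \<omega> = k} \<omega>)
            = (1 - 2*q) * (2*q)^k * (phi_fun q z v)^k * psi_fun q z v)
       \<and> (\<forall>(k::nat) (v::real). v < - ln (1 - (1 - 2*q) / (1 - (q/p)^z)) \<longrightarrow>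
            prob_space.expectation M
              (\<lambda>\<omega>. exp (v * real (xi X (- int z) \<omega>)) * indicator {\<omega>. xi X 0 \<omega> = k} \<omega>)
            = (1 - 2*q) * (2*q)^k * (phi_fun q z v)^k)
       \<and> (\<forall>k::nat. k \<ge> 1 \<longrightarrow>
            measure M {\<omega>\<in>space M. Xi X {0, int z} \<omega> = k}
            = (1 - 2*q) / (2 * (q/p) powr (z/2)) *
              (((2*q + (q/p) powr (z/2)) / (1 + (q/p) powr (z/2)))^k
             - ((2*q - (q/p) powr (z/2)) / (1 - (q/p) powr (z/2)))^k))
       \<and> (\<forall>k::nat.
            measure M {\<omega>\<in>space M. Xi X {0, - int z} \<omega> = k}
            = (1 - 2*q) / 2 *
              (((2*q + (q/p) powr (z/2)) / (1 + (q/p) powr (z/2)))^k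
             + ((2*q - (q/p) powr (z/2)) / (1 - (q/p) powr (z/2)))^k))"
proof -
  interpret setting M X p q by (rule setting.intro; fact assms)
  show ?thesis by (rule main[OF assms(9)])
qed

end
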